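(* There is no nontrivial strongly regular graph that is both a Neumaier graph and a circulant graph.
   Context: All graphs are finite, simple, undirected and connected. A graph is edge-regular if it is regular and any two adjacent vertices have a constant number of common neighbours. A clique $C$ is a regular clique with nexus $a$ if every vertex not in $C$ has exactly $a$ neighbours in $C$. A Neumaier graph is a non-complete edge-regular graph containing a regular clique. A strongly regular graph with parameters $(n,k,\lambda,\mu)$ is a non-complete connected $k$-regular graph on $n$ vertices in which adjacent vertices have $\lambda$ common neighbours and non-adjacent vertices have $\mu$ common neighbours; it is nontrivial if $0<\mu<k$. A circulant graph on $n$ vertices is a Cayley graph $\mathrm{Cay}(\mathbb{Z}_n,S)$, where $S\subseteq\mathbb{Z}_n\setminus\{0\}$ is closed under negation and $x,y$ are adjacent iff $x-y\in S$. *)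

theory Defs
  imports Main
begin

definition simple_graph :: "'a set \<Rightarrow> ('a \<Rightarrow> 'a \<Rightarrow> bool) \<Rightarrow> bool" where
  "simple_graph V E \<longleftrightarrow> finite V \<and> V \<noteq> {} \<and>
     (\<forall>x\<in>V. \<forall>y\<in>V. E x y \<longleftrightarrow> E y x) \<and> (\<forall>x\<in>V. \<not> E x x)"

definition nbrs :: "'a set \<Rightarrow> ('a \<Rightarrow> 'a \<Rightarrow> bool) \<Rightarrow> 'a \<Rightarrow> 'a set" where
  "nbrs V E x = {y\<in>V. E x y}"

definition connected_graph :: "'a set \<Rightarrow> ('a \<Rightarrow> 'a \<Rightarrow> bool) \<Rightarrow> bool" where
  "connected_graph V E \<longleftrightarrow>
     (\<forall>x\<in>V. \<forall>y\<in>V. (\<lambda>u v. u \<in> V \<and> v \<in> V \<and> E u v)\<^sup>*\<^sup>* x y)"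

definition regular_graph :: "'a set \<Rightarrow> ('a \<Rightarrow> 'a \<Rightarrow> bool) \<Rightarrow> nat \<Rightarrow> bool" where
  "regular_graph V E k \<longleftrightarrow> (\<forall>x\<in>V. card (nbrs V E x) = k)"

definition complete_graph :: "'a set \<Rightarrow> ('a \<Rightarrow> 'a \<Rightarrow> bool) \<Rightarrow> bool" where
  "complete_graph V E \<longleftrightarrow> (\<forall>x\<in>V. \<forall>y\<in>V. x \<noteq> y \<longrightarrow> E x y)"

definition edge_regular :: "'a set \<Rightarrow> ('a \<Rightarrow> 'a \<Rightarrow> bool) \<Rightarrow> nat \<Rightarrow> nat \<Rightarrow> bool" where
  "edge_regular V E k lam \<longleftrightarrow> regular_graph V E k \<and>
     (\<forall>x\<in>V. \<forall>y\<in>V. E x y \<longrightarrow> card (nbrs V E x \<inter> nbrs V E y) = lam)"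

definition is_clique :: "'a set \<Rightarrow> ('a \<Rightarrow> 'a \<Rightarrow> bool) \<Rightarrow> 'a set \<Rightarrow> bool" where
  "is_clique V E C \<longleftrightarrow> C \<subseteq> V \<and> C \<noteq> {} \<and> (\<forall>x\<in>C. \<forall>y\<in>C. x \<noteq> y \<longrightarrow> E x y)"

definition regular_clique :: "'a set \<Rightarrow> ('a \<Rightarrow> 'a \<Rightarrow> bool) \<Rightarrow> 'a set \<Rightarrow> nat \<Rightarrow> bool" where
  "regular_clique V E C a \<longleftrightarrow> is_clique V E C \<and>
     (\<forall>x\<in>V - C. card (nbrs V E x \<inter> C) = a)"

definition neumaier_graph :: "'a set \<Rightarrow> ('a \<Rightarrow> 'a \<Rightarrow> bool) \<Rightarrow> bool" where
  "neumaier_graph V E \<longleftrightarrow> simple_graph V E \<and> connected_graph V E \<and> \<not> complete_graph V E \<and>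
     (\<exists>k lam. edge_regular V E k lam) \<and> (\<exists>C a. regular_clique V E C a)"

definition strongly_regular :: "'a set \<Rightarrow> ('a \<Rightarrow> 'a \<Rightarrow> bool) \<Rightarrow> nat \<Rightarrow> nat \<Rightarrow> nat \<Rightarrow> nat \<Rightarrow> bool" where
  "strongly_regular V E n k lam mu \<longleftrightarrow> simple_graph V E \<and> connected_graph V E \<and>
     \<not> complete_graph V E \<and> card V = n \<and> edge_regular V E k lam \<and>
     (\<forall>x\<in>V. \<forall>y\<in>V. x \<noteq> y \<and> \<not> E x y \<longrightarrow> card (nbrs V E x \<inter> nbrs V E y) = mu)"

definition nontrivial_srg :: "'a set \<Rightarrow> ('a \<Rightarrow> 'a \<Rightarrow> bool) \<Rightarrow> bool" where
  "nontrivial_srg V E \<longleftrightarrow> (\<exists>n k lam mu. strongly_regular V E n k lam mu \<and> 0 < mu \<and> mu < k)"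

text \<open>Circulant graph Cay(Z_n, S): vertices {0..<n} (integers), S a subset of
  nonzero residues closed under negation, x ~ y iff (x - y) mod n in S.\<close>
definition circulant_conn :: "int \<Rightarrow> int set \<Rightarrow> bool" where
  "circulant_conn n S \<longleftrightarrow> 0 < n \<and> S \<subseteq> {1..<n} \<and> (\<forall>s\<in>S. (- s) mod n \<in> S)"

definition circ_adj :: "int \<Rightarrow> int set \<Rightarrow> int \<Rightarrow> int \<Rightarrow> bool" where
  "circ_adj n S x y \<longleftrightarrow> (x - y) mod n \<in> S"

definition graph_iso :: "'a set \<Rightarrow> ('a \<Rightarrow> 'a \<Rightarrow> bool) \<Rightarrow> 'b set \<Rightarrow> ('b \<Rightarrow> 'b \<Rightarrow> bool) \<Rightarrow> bool" where
  "graph_iso V E W F \<longleftrightarrow> (\<exists>f. bij_betw f V W \<and> (\<forall>x\<in>V. \<forall>y\<in>V. E x y \<longleftrightarrow> F (f x) (f y)))"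

definition circulant_graph :: "'a set \<Rightarrow> ('a \<Rightarrow> 'a \<Rightarrow> bool) \<Rightarrow> bool" where
  "circulant_graph V E \<longleftrightarrow>
     (\<exists>n S. circulant_conn n S \<and> graph_iso V E {0..<n} (circ_adj n S))"

end

theory Submission
  imports Defs "HOL-Number_Theory.Number_Theory" "HOL-Computational_Algebra.Polynomial"
begin

definition red :: "int \<Rightarrow> int poly \<Rightarrow> int \<Rightarrow> int" where
  "red n A y = (\<Sum>i\<le>degree A. if int i mod n = y then coeff A i else 0)"

definition Mp :: "int \<Rightarrow> int poly" where
  "Mp n = monom 1 (nat n) - 1"

lemma red_bound:
  assumes "degree A \<le> D"
  shows "red n A y = (\<Sum>i\<le>D. if int i mod n = y then coeff A i else 0)"
  unfolding red_def
  by (rule sum.mono_neutral_left) (use assms in \<open>auto simp: coeff_eq_0\<close>)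

lemma red_add: "red n (A + B) y = red n A y + red n B y"
proof -
  let ?D = "max (degree A) (degree B)"
  have "degree (A + B) \<le> ?D" by (rule degree_add_le) auto
  then show ?thesis
    by (simp add: red_bound[of _ ?D] sum.distrib[symmetric] if_distrib)
       (rule sum.cong; auto)
qed

lemma red_uminus: "red n (- A) y = - red n A y"
  unfolding red_def by (simp add: sum_negf[symmetric] if_distrib) (rule sum.cong; auto)

lemma red_diff: "red n (A - B) y = red n A y - red n B y"
  using red_add[of n A "- B" y] red_uminus[of n B y] by simp

lemma red_smult: "red n (smult c A) y = c * red n A y"
proof -
  have "degree (smult c A) \<le> degree A" by simp
  then show ?thesis
    by (simp add: red_bound[of _ "degree A"] sum_distrib_left) (rule sum.cong; auto)
qed

lemma red_zero[simp]: "red n 0 y = 0"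
  unfolding red_def by (simp only: coeff_0 if_cancel sum.neutral_const)

lemma red_sum: "finite I \<Longrightarrow> red n (\<Sum>i\<in>I. f i) y = (\<Sum>i\<in>I. red n (f i) y)"
  by (induction I rule: finite_induct) (auto simp: red_add)

lemma red_monom: "red n (monom c i) y = (if int i mod n = y then c else 0)"
proof -
  have "degree (monom c i) \<le> i" by (simp add: degree_monom_le)
  then have "red n (monom c i) y = (\<Sum>j\<le>i. if int j mod n = y then coeff (monom c i) j else 0)"
    by (rule red_bound)
  also have "\<dots> = (\<Sum>j\<in>{i}. if int j mod n = y then coeff (monom c i) j else 0)"
    by (rule sum.mono_neutral_right) (auto simp: coeff_monom)
  finally show ?thesis by (simp add: coeff_monom)
qed

lemma red_const: "red n [:c:] y = (if 0 mod n = y then c else 0)"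
  using red_monom[of n c 0 y] by (simp add: monom_0)

lemma red_one: "red n 1 y = (if 0 mod n = y then 1 else 0)"
  using red_const[of n 1 y] by (simp add: one_pCons)

lemma red_shift:
  assumes "n > 0"
  shows "red n (monom 1 (nat n) * Q) y = red n Q y"
proof -
  let ?N = "nat n"
  let ?D = "degree Q"
  have "degree (monom 1 ?N * Q) \<le> ?D + ?N"
    by (metis add.commute degree_monom_le degree_mult_le dual_order.trans add_le_mono1)
  then have "red n (monom 1 ?N * Q) y =
     (\<Sum>i\<le>?D + ?N. if int i mod n = y then coeff (monom 1 ?N * Q) i else 0)"
    by (rule red_bound)
  also have "\<dots> = (\<Sum>i\<in>{?N..?D + ?N}. if int i mod n = y then coeff (monom 1 ?N * Q) i else 0)"
    by (rule sum.mono_neutral_right) (auto simp: coeff_monom_mult)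
  also have "\<dots> = (\<Sum>i\<in>{0..?D}. if int (i + ?N) mod n = y then coeff (monom 1 ?N * Q) (i + ?N) else 0)"
    using sum.shift_bounds_cl_nat_ivl[of "\<lambda>i. if int i mod n = y then coeff (monom 1 ?N * Q) i else 0" 0 ?N ?D]
    by simp
  also have "\<dots> = (\<Sum>i\<in>{0..?D}. if int i mod n = y then coeff Q i else 0)"
  proof (rule sum.cong)
    fix i assume "i \<in> {0..?D}"
    have "int (i + ?N) mod n = int i mod n" using assms by simp
    then show "(if int (i + ?N) mod n = y then coeff (monom 1 ?N * Q) (i + ?N) else 0) =
          (if int i mod n = y then coeff Q i else 0)"
      by (simp add: coeff_monom_mult)
  qed simp
  also have "\<dots> = red n Q y" unfolding red_def by (simp add: atLeast0AtMost)
  finally show ?thesis .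
qed

lemma red_Mp: "n > 0 \<Longrightarrow> red n (Mp n * Q) y = 0"
  unfolding Mp_def by (simp add: left_diff_distrib red_diff red_shift)

lemma pow_minus_one_dvd: "(x - 1) dvd (x ^ j - (1::'a::comm_ring_1))"
proof (induction j)
  case (Suc j)
  have e: "x ^ Suc j - 1 = x * (x ^ j - 1) + (x - 1)" by (simp add: algebra_simps)
  have "x - 1 dvd x * (x ^ j - 1)" using Suc by simp
  then have "x - 1 dvd x * (x ^ j - 1) + (x - 1)" by (rule dvd_add) simp
  then show ?case by (subst e)
qed simp

lemma Mp_dvd_monom:
  assumes "n > 0"
  shows "Mp n dvd (monom c i - monom c (i mod nat n))"
proof -
  let ?N = "nat n"
  have "monom c i = monom c (i mod ?N) * monom 1 (?N * (i div ?N))"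
    by (simp add: mult_monom)
  moreover have "monom (1::int) (?N * (i div ?N)) = (monom 1 ?N) ^ (i div ?N)"
    by (simp add: monom_power mult.commute)
  ultimately have "monom c i - monom c (i mod ?N) = monom c (i mod ?N) * ((monom 1 ?N) ^ (i div ?N) - 1)"
    by (simp add: algebra_simps)
  moreover have "Mp n dvd ((monom 1 ?N) ^ (i div ?N) - 1)"
    unfolding Mp_def by (rule pow_minus_one_dvd)
  ultimately show ?thesis by simp
qed

lemma Mp_repr:
  assumes "n > 0"
  shows "Mp n dvd (A - (\<Sum>y<nat n. monom (red n A (int y)) y))"
proof -
  let ?N = "nat n"
  have A: "A = (\<Sum>i\<le>degree A. monom (coeff A i) i)" by (simp add: poly_as_sum_of_monoms)
  have "(\<Sum>y<?N. monom (red n A (int y)) y) =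
        (\<Sum>y<?N. \<Sum>i\<le>degree A. monom (if i mod ?N = y then coeff A i else 0) y)"
  proof (rule sum.cong)
    fix y assume y: "y \<in> {..<?N}"
    have "\<And>i. (int i mod n = int y) = (i mod ?N = y)"
    proof -
      fix i
      have "int i mod n = int (i mod ?N)" using assms by (simp add: zmod_int)
      then show "(int i mod n = int y) = (i mod ?N = y)" by simp
    qed
    then show "monom (red n A (int y)) y = (\<Sum>i\<le>degree A. monom (if i mod ?N = y then coeff A i else 0) y)"
      unfolding red_def monom_sum by simp
  qed simp
  also have "\<dots> = (\<Sum>i\<le>degree A. \<Sum>y<?N. monom (if i mod ?N = y then coeff A i else 0) y)"
    by (rule sum.swap)
  also have "\<dots> = (\<Sum>i\<le>degree A. monom (coeff A i) (i mod ?N))"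
  proof (rule sum.cong)
    fix i assume "i \<in> {..degree A}"
    have "i mod ?N < ?N" using assms by simp
    then have "(\<Sum>y<?N. monom (if i mod ?N = y then coeff A i else 0) y) =
          (\<Sum>y\<in>{i mod ?N}. monom (if i mod ?N = y then coeff A i else 0) y)"
      by (intro sum.mono_neutral_right) auto
    then show "(\<Sum>y<?N. monom (if i mod ?N = y then coeff A i else 0) y) = monom (coeff A i) (i mod ?N)"
      by simp
  qed simp
  finally have "A - (\<Sum>y<?N. monom (red n A (int y)) y) =
      (\<Sum>i\<le>degree A. monom (coeff A i) i - monom (coeff A i) (i mod ?N))"
    by (subst A) (simp add: sum_subtractf)
  moreover have "Mp n dvd (\<Sum>i\<le>degree A. monom (coeff A i) i - monom (coeff A i) (i mod ?N))"
    by (rule dvd_sum) (rule Mp_dvd_monom[OF assms])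
  ultimately show ?thesis by simp
qed

lemma red_eq_imp_dvd:
  assumes "n > 0" and "\<And>y. 0 \<le> y \<Longrightarrow> y < n \<Longrightarrow> red n A y = red n B y"
  shows "Mp n dvd (A - B)"
proof -
  have "(\<Sum>y<nat n. monom (red n (A - B) (int y)) y) = 0"
    by (rule sum.neutral) (use assms in \<open>auto simp: red_diff\<close>)
  then show ?thesis using Mp_repr[OF assms(1), of "A - B"] by simp
qed


lemma frob_add:
  fixes a b :: "'a::comm_ring_1"
  assumes p: "prime p"
  shows "\<exists>c. (a + b) ^ p = a ^ p + b ^ p + of_nat p * c"
proof -
  have p0: "p \<noteq> 0" using p by auto
  let ?f = "\<lambda>k. of_nat (p choose k) * a ^ k * b ^ (p - k)"
  have "(a + b) ^ p = (\<Sum>k\<le>p. ?f k)" by (rule binomial_ring)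
  also have "{..p} = insert 0 (insert p {1..<p})" using p0 by auto
  also have "(\<Sum>k\<in>insert 0 (insert p {1..<p}). ?f k) = ?f 0 + ?f p + (\<Sum>k\<in>{1..<p}. ?f k)"
    using p0 by (simp add: add.assoc)
  also have "(\<Sum>k\<in>{1..<p}. ?f k) = of_nat p * (\<Sum>k\<in>{1..<p}. of_nat ((p choose k) div p) * a ^ k * b ^ (p - k))"
    unfolding sum_distrib_left
  proof (rule sum.cong)
    fix k assume k: "k \<in> {1..<p}"
    have "p dvd (p choose k)" using k p0 p by (intro dvd_choose_prime) auto
    then have "p choose k = p * ((p choose k) div p)" by simp
    then have "(of_nat (p choose k) :: 'a) = of_nat p * of_nat ((p choose k) div p)"
      by (metis of_nat_mult)
    then show "?f k = of_nat p * (of_nat ((p choose k) div p) * a ^ k * b ^ (p - k))"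
      by (simp add: mult.assoc)
  qed simp
  finally show ?thesis by (auto simp: add_ac)
qed

lemma fermat_nat_aux:
  assumes p: "prime p"
  shows "int p dvd (int x) ^ p - int x"
proof (induction x)
  case 0
  have "p \<noteq> 0" using p by auto
  then show ?case by (simp add: power_0_left)
next
  case (Suc x)
  obtain c where c: "(int x + 1) ^ p = int x ^ p + 1 ^ p + of_nat p * c"
    using frob_add[OF p, of "int x" 1] by blast
  have e: "int (Suc x) ^ p - int (Suc x) = (int x ^ p - int x) + int p * c"
    using c by (simp add: add.commute)
  show ?case unfolding e by (rule dvd_add[OF Suc.IH]) simp
qed

lemma fermat_int:
  assumes p: "prime p"
  shows "int p dvd r ^ p - (r::int)"
proof -
  have pp: "int p > 0" using p prime_gt_0_nat by auto
  define x where "x = nat (r mod int p)"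
  have x: "int x = r mod int p" unfolding x_def using pp by simp
  have "[r = int x] (mod int p)" unfolding x by (simp add: cong_def)
  then have "[r ^ p = int x ^ p] (mod int p)" by (rule cong_pow)
  moreover have "[int x ^ p = int x] (mod int p)"
    using fermat_nat_aux[OF p, of x] by (simp add: cong_iff_dvd_diff)
  moreover have "[int x = r] (mod int p)" using \<open>[r = int x] (mod int p)\<close> by (rule cong_sym)
  ultimately have "[r ^ p = r] (mod int p)" by (meson cong_trans)
  then show ?thesis by (simp add: cong_iff_dvd_diff)
qed

lemma frob_poly:
  assumes p: "prime p" and fin: "finite D"
  shows "\<exists>R. (\<Sum>d\<in>D. monom (1::int) d) ^ p = (\<Sum>d\<in>D. monom 1 (p * d)) + smult (int p) R"
  using fin
proof (induction D rule: finite_induct)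
  case empty
  have "p \<noteq> 0" using p by auto
  then show ?case by (intro exI[of _ 0]) simp
next
  case (insert d D)
  obtain R where R: "(\<Sum>d\<in>D. monom (1::int) d) ^ p = (\<Sum>d\<in>D. monom 1 (p * d)) + smult (int p) R"
    using insert.IH by blast
  obtain c where c: "(monom (1::int) d + (\<Sum>d\<in>D. monom 1 d)) ^ p =
      (monom 1 d) ^ p + (\<Sum>d\<in>D. monom 1 d) ^ p + of_nat p * c"
    using frob_add[OF p] by blast
  have sc: "(of_nat p :: int poly) * c = smult (int p) c" by (simp add: of_nat_mult_conv_smult)
  have "(\<Sum>d\<in>insert d D. monom (1::int) d) ^ p = monom 1 (p * d) + ((\<Sum>d\<in>D. monom 1 (p * d)) + smult (int p) R) + smult (int p) c"
    using c R insert.hyps unfolding sc by (simp add: monom_power mult.commute)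
  also have "\<dots> = (\<Sum>d\<in>insert d D. monom 1 (p * d)) + smult (int p) (R + c)"
    using insert.hyps by (simp add: smult_add_right add_ac)
  finally show ?case by blast
qed


fun UV :: "int \<Rightarrow> int \<Rightarrow> nat \<Rightarrow> int \<times> int" where
  "UV a b 0 = (0, 1)"
| "UV a b (Suc j) = (a * fst (UV a b j) + snd (UV a b j), b * fst (UV a b j))"

lemma UV_root:
  assumes "r^2 = a * r + b"
  shows "r ^ j = fst (UV a b j) * r + snd (UV a b j)"
proof (induction j)
  case (Suc j)
  have "r ^ Suc j = r * (fst (UV a b j) * r + snd (UV a b j))" using Suc by simp
  also have "\<dots> = fst (UV a b j) * r^2 + snd (UV a b j) * r" by (simp add: algebra_simps power2_eq_square)
  also have "\<dots> = fst (UV a b (Suc j)) * r + snd (UV a b (Suc j))"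
    using assms by (simp add: algebra_simps)
  finally show ?case .
qed simp

lemma U_cong1:
  assumes q: "prime q" and r: "r^2 = a * r + b" and "\<not> int q dvd (r - (a - r))"
  shows "int q dvd fst (UV a b q) - 1" "int q dvd snd (UV a b q)"
proof -
  let ?s = "a - r"
  let ?U = "fst (UV a b q)" and ?V = "snd (UV a b q)"
  have s: "?s^2 = a * ?s + b" using r by (simp add: algebra_simps power2_eq_square)
  have er: "r ^ q = ?U * r + ?V" by (rule UV_root[OF r])
  have es: "?s ^ q = ?U * ?s + ?V" by (rule UV_root[OF s])
  have f1: "int q dvd r ^ q - r" and f2: "int q dvd ?s ^ q - ?s" using fermat_int[OF q] by auto
  have eq: "(?U - 1) * (r - ?s) = (r ^ q - r) - (?s ^ q - ?s)" using er es by (simp add: algebra_simps)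
  have "int q dvd (?U - 1) * (r - ?s)" unfolding eq by (rule dvd_diff[OF f1 f2])
  moreover have "prime (int q)" using q by simp
  ultimately show u: "int q dvd ?U - 1" using assms(3) by (simp add: prime_dvd_mult_iff)
  have "?V = (r ^ q - r) - (?U - 1) * r" using er by (simp add: algebra_simps)
  then show "int q dvd ?V" using f1 u by simp
qed

lemma U_cong0:
  assumes q: "prime q" and r: "r^2 = a * r + b" and d: "int q dvd (r - (a - r))"
  shows "int q dvd fst (UV a b q)"
proof -
  have b: "b = r^2 - a * r" using r by simp
  have "int q dvd fst (UV a b (Suc j)) - int (Suc j) * r ^ j \<and>
        int q dvd snd (UV a b (Suc j)) + int j * r ^ (Suc j)" for j
  proof (induction j)
    case 0
    then show ?case by simp
  next
    case (Suc j)
    let ?U = "fst (UV a b (Suc j))" and ?V = "snd (UV a b (Suc j))"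
    define e1 where "e1 = ?U - int (Suc j) * r ^ j"
    define e2 where "e2 = ?V + int j * r ^ (Suc j)"
    have h1: "int q dvd e1" and h2: "int q dvd e2" using Suc unfolding e1_def e2_def by auto
    have d2: "int q dvd (a - 2 * r)" using d by (metis minus_diff_eq dvd_minus_iff diff_diff_eq2 mult_2 add.commute diff_diff_eq)
    have "fst (UV a b (Suc (Suc j))) - int (Suc (Suc j)) * r ^ Suc j
        = a * e1 + e2 + (a - 2 * r) * (int (Suc j) * r ^ j)"
      unfolding e1_def e2_def by (simp add: algebra_simps)
    moreover have "int q dvd a * e1 + e2 + (a - 2 * r) * (int (Suc j) * r ^ j)"
      using h1 h2 d2 by simp
    moreover have "snd (UV a b (Suc (Suc j))) + int (Suc j) * r ^ Suc (Suc j)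
        = b * e1 + (r * (r - (a - r))) * (int (Suc j) * r ^ j)"
      unfolding e1_def b by (simp add: algebra_simps power2_eq_square)
    moreover have "int q dvd b * e1 + (r * (r - (a - r))) * (int (Suc j) * r ^ j)"
      using h1 d by simp
    ultimately show ?case by simp
  qed
  from this[of "q - 1"] have "int q dvd fst (UV a b q) - int q * r ^ (q - 1)"
    using q prime_gt_0_nat by (metis Suc_diff_1)
  moreover have "fst (UV a b q) = (fst (UV a b q) - int q * r ^ (q - 1)) + int q * r ^ (q - 1)" by simp
  ultimately show ?thesis by (metis dvd_add dvd_triv_left)
qed


lemma exists_avoiding:
  fixes a b :: nat
  assumes b: "b > 0" and ab: "coprime a b" and fin: "finite P" and Pp: "\<forall>q\<in>P. prime q"
  shows "\<exists>x>0. [x = a] (mod b) \<and> (\<forall>q\<in>P. \<not> q dvd x)"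
  using fin Pp
proof (induction P rule: finite_induct)
  case empty
  show ?case using b by (intro exI[of _ "a + b"]) (auto simp: cong_def)
next
  case (insert q P)
  then obtain x where x: "x > 0" "[x = a] (mod b)" "\<forall>q\<in>P. \<not> q dvd x" by auto
  have qp: "prime q" using insert by auto
  show ?case
  proof (cases "q dvd x")
    case False
    then show ?thesis using x by auto
  next
    case True
    define x' where "x' = x + b * prod id P"
    have "[x' = x] (mod b)" unfolding x'_def by (simp add: cong_def)
    then have c1: "[x' = a] (mod b)" using x(2) by (rule cong_trans)
    have qb: "\<not> q dvd b"
    proof
      assume "q dvd b"
      then have "q dvd a" using True x(2)
        by (metis cong_dvd_iff cong_dvd_modulus_nat)
      then show False using \<open>q dvd b\<close> ab qp
        by (metis coprime_common_divisor not_prime_unit)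
    qed
    have qP: "\<not> q dvd prod id P"
    proof
      assume "q dvd prod id P"
      then obtain q' where "q' \<in> P" "q dvd q'" using qp insert.hyps(1)
        by (auto simp: prime_dvd_prod_iff)
      then have "q = q'" using insert.prems qp by (metis insertCI primes_dvd_imp_eq)
      then show False using \<open>q' \<in> P\<close> insert.hyps(2) by simp
    qed
    have "\<not> q dvd b * prod id P" using qb qP qp by (simp add: prime_dvd_mult_iff)
    then have c2: "\<not> q dvd x'" using True unfolding x'_def by (simp add: dvd_add_right_iff)
    have c3: "\<forall>q'\<in>P. \<not> q' dvd x'"
    proof
      fix q' assume "q' \<in> P"
      then have "q' dvd b * prod id P" using insert.hyps(1) by (simp add: dvd_prod_eqI)
      then show "\<not> q' dvd x'" using x(3) \<open>q' \<in> P\<close> unfolding x'_def by (simp add: dvd_add_left_iff)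
    qed
    have "x' > 0" unfolding x'_def using x by simp
    then show ?thesis using c1 c2 c3 by auto
  qed
qed

lemma exists_coprime_in_class:
  fixes a b N :: nat
  assumes b: "b > 0" and ab: "coprime a b" and N: "N > 0"
  shows "\<exists>x>0. [x = a] (mod b) \<and> coprime x N"
proof -
  obtain x where x: "x > 0" "[x = a] (mod b)" "\<forall>q\<in>prime_factors N. \<not> q dvd x"
    using exists_avoiding[OF b ab, of "prime_factors N"] by auto
  have "coprime x N"
  proof (rule ccontr)
    assume "\<not> coprime x N"
    then obtain q where "prime q" "q dvd x" "q dvd N"
      by (metis prime_factor_nat coprime_common_divisor gcd_nat.order_iff_strict gcd_unique_nat
          is_unit_gcd  dvd_gcdD1 dvd_gcdD2 dvd_trans)
    then have "q \<in> prime_factors N" using N by (auto simp: in_prime_factors_iff)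
    then show False using x(3) \<open>q dvd x\<close> by auto
  qed
  then show ?thesis using x by auto
qed

lemma mult_closed_all:
  fixes n :: int and N :: nat
  assumes Ssub: "S \<subseteq> {0..<n}"
    and prim: "\<And>q d. prime q \<Longrightarrow> \<not> q dvd N \<Longrightarrow> d \<in> S \<Longrightarrow> (int q * d) mod n \<in> S"
  shows "x > 0 \<Longrightarrow> coprime x N \<Longrightarrow> d \<in> S \<Longrightarrow> (int x * d) mod n \<in> S"
proof (induction x arbitrary: d rule: less_induct)
  case (less x)
  show ?case
  proof (cases "x = 1")
    case True
    then show ?thesis using less.prems Ssub by auto
  next
    case False
    then obtain q where q: "prime q" "q dvd x" using less.prems(1)
      by (metis prime_factor_nat)
    then obtain x' where x': "x = q * x'" by (auto elim: dvdE)
    have "x' > 0" using less.prems(1) x' by auto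
    have "x' < x" using x' q less.prems(1) prime_gt_1_nat by auto
    have "coprime x' N" using less.prems(2) x' by simp
    have qN: "\<not> q dvd N"
      using less.prems(2) q x' by (metis coprime_common_divisor dvd_mult2 dvd_refl not_prime_unit)
    have d': "(int x' * d) mod n \<in> S" using less.IH[OF \<open>x' < x\<close> \<open>x' > 0\<close> \<open>coprime x' N\<close> less.prems(3)] .
    have "(int q * ((int x' * d) mod n)) mod n \<in> S" by (rule prim[OF q(1) qN d'])
    moreover have "(int q * ((int x' * d) mod n)) mod n = (int x * d) mod n"
      unfolding x' by (simp add: mod_mult_right_eq mult.assoc)
    ultimately show ?thesis by simp
  qed
qed

definition Nb :: "int \<Rightarrow> int set \<Rightarrow> int \<Rightarrow> int set" where
  "Nb n S u = {z \<in> {0..<n}. (u - z) mod n \<in> S}"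

locale cayley =
  fixes n :: int and S :: "int set" and k lam mu :: nat
  assumes npos: "n > 0" and Ssub: "S \<subseteq> {1..<n}" and Ssym: "\<And>s. s \<in> S \<Longrightarrow> (- s) mod n \<in> S"
    and deg: "\<And>u. 0 \<le> u \<Longrightarrow> u < n \<Longrightarrow> card (Nb n S u) = k"
    and lam: "\<And>u v. 0 \<le> u \<Longrightarrow> u < n \<Longrightarrow> 0 \<le> v \<Longrightarrow> v < n \<Longrightarrow> (u - v) mod n \<in> S
                \<Longrightarrow> card (Nb n S u \<inter> Nb n S v) = lam"
    and mu: "\<And>u v. 0 \<le> u \<Longrightarrow> u < n \<Longrightarrow> 0 \<le> v \<Longrightarrow> v < n \<Longrightarrow> u \<noteq> v \<Longrightarrow> (u - v) mod n \<notin> S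
                \<Longrightarrow> card (Nb n S u \<inter> Nb n S v) = mu"
begin

lemma S_range: "s \<in> S \<Longrightarrow> 0 < s \<and> s < n" using Ssub by auto

lemma finS: "finite S" using Ssub finite_subset by (metis finite_atLeastLessThan_int)

lemma sym_iff: "0 \<le> z \<Longrightarrow> z < n \<Longrightarrow> (- z) mod n \<in> S \<longleftrightarrow> z \<in> S"
proof
  assume z: "0 \<le> z" "z < n" and zz: "(- z) mod n \<in> S"
  have "(- ((- z) mod n)) mod n \<in> S" using zz by (rule Ssym)
  moreover have "(- ((- z) mod n)) mod n = (- (- z)) mod n" by (rule mod_minus_eq)
  moreover have "(- (- z)) mod n = z" using z by simp
  ultimately show "z \<in> S" by simp
qed (rule Ssym)

lemma sym_diff: "(a - b) mod n \<in> S \<longleftrightarrow> (b - a) mod n \<in> S"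
proof -
  have "(b - a) mod n = (- ((a - b) mod n)) mod n" by (simp add: mod_minus_eq)
  then show ?thesis using sym_iff[of "(a - b) mod n"] npos by simp
qed

lemma Nb0: "Nb n S 0 = S"
  unfolding Nb_def using sym_iff Ssub by auto

lemma cardS: "card S = k" using deg[of 0] npos Nb0 by simp

lemma common0: "Nb n S 0 \<inter> Nb n S y = {z \<in> S. (y - z) mod n \<in> S}"
  unfolding Nb0 unfolding Nb_def using Ssub by auto

definition P :: "int poly" where "P = (\<Sum>d\<in>S. monom 1 (nat d))"
definition Gp :: "int poly" where "Gp = (\<Sum>i<nat n. monom 1 i)"

lemma red_P: "0 \<le> y \<Longrightarrow> y < n \<Longrightarrow> red n P y = (if y \<in> S then 1 else 0)"
proof -
  assume y: "0 \<le> y" "y < n"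
  have "red n P y = (\<Sum>d\<in>S. if d = y then 1 else 0)"
    unfolding P_def red_sum[OF finS] red_monom
  proof (rule sum.cong)
    fix d assume "d \<in> S"
    then have "int (nat d) mod n = d" using S_range[of d] by simp
    then show "(if int (nat d) mod n = y then 1 else 0) = (if d = y then 1 else 0)" by simp
  qed simp
  also have "\<dots> = (if y \<in> S then 1 else 0)" using finS by (simp add: sum.delta')
  finally show ?thesis .
qed

lemma card_one_sol: "0 \<le> y \<Longrightarrow> y < n \<Longrightarrow> card {i \<in> {..<nat n}. (c + int i) mod n = y} = 1"
proof -
  assume y: "0 \<le> y" "y < n"
  have "{i \<in> {..<nat n}. (c + int i) mod n = y} = {nat ((y - c) mod n)}"
  proof (intro equalityI subsetI)
    fix i assume "i \<in> {i \<in> {..<nat n}. (c + int i) mod n = y}"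
    then have i: "int i < n" "(c + int i) mod n = y" by auto
    then have "(y - c) mod n = ((c + int i) mod n - c) mod n" by simp
    also have "\<dots> = int i mod n" by (simp add: mod_diff_left_eq)
    also have "\<dots> = int i" using i by simp
    finally show "i \<in> {nat ((y - c) mod n)}" by simp
  next
    fix i assume "i \<in> {nat ((y - c) mod n)}"
    then have i: "int i = (y - c) mod n" using npos by simp
    have "int i < n" using i npos by simp
    moreover have "(c + int i) mod n = y" unfolding i using y
      by (simp add: mod_add_right_eq)
    ultimately show "i \<in> {i \<in> {..<nat n}. (c + int i) mod n = y}" by auto
  qed
  then show ?thesis by simp
qed

lemma red_Gp: "0 \<le> y \<Longrightarrow> y < n \<Longrightarrow> red n Gp y = 1"
proof -
  assume y: "0 \<le> y" "y < n"
  have "red n Gp y = (\<Sum>i<nat n. if int i mod n = y then 1 else 0)"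
    unfolding Gp_def red_sum[OF finite_lessThan] red_monom ..
  also have "\<dots> = card {i \<in> {..<nat n}. (0 + int i) mod n = y}"
    by (simp add: sum.If_cases) (rule arg_cong[where f=card]; auto)
  also have "\<dots> = 1" using card_one_sol[OF y, of 0] by simp
  finally show ?thesis .
qed

lemma red_monom_Gp: "0 \<le> y \<Longrightarrow> y < n \<Longrightarrow> red n (monom 1 d * Gp) y = 1"
proof -
  assume y: "0 \<le> y" "y < n"
  have "monom 1 d * Gp = (\<Sum>i<nat n. monom 1 (d + i))"
    unfolding Gp_def by (simp add: sum_distrib_left mult_monom)
  then have "red n (monom 1 d * Gp) y = (\<Sum>i<nat n. if int (d + i) mod n = y then 1 else 0)"
    by (simp add: red_sum red_monom)
  also have "\<dots> = card {i \<in> {..<nat n}. (int d + int i) mod n = y}"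
    by (simp add: sum.If_cases) (rule arg_cong[where f=card]; auto)
  also have "\<dots> = 1" using card_one_sol[OF y] by simp
  finally show ?thesis .
qed

lemma red_PP: "0 \<le> y \<Longrightarrow> y < n \<Longrightarrow> red n (P * P) y = int (card {z \<in> S. (y - z) mod n \<in> S})"
proof -
  assume y: "0 \<le> y" "y < n"
  have "P * P = (\<Sum>d\<in>S. \<Sum>e\<in>S. monom 1 (nat d + nat e))"
    unfolding P_def sum_product by (simp add: mult_monom)
  then have "red n (P * P) y = (\<Sum>d\<in>S. \<Sum>e\<in>S. if int (nat d + nat e) mod n = y then 1 else 0)"
    by (simp add: red_sum[OF finS] red_monom)
  also have "\<dots> = (\<Sum>d\<in>S. if (y - d) mod n \<in> S then 1 else 0)"
  proof (rule sum.cong)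
    fix d assume d: "d \<in> S"
    have "(\<Sum>e\<in>S. if int (nat d + nat e) mod n = y then 1 else 0) = (\<Sum>e\<in>S. if e = (y - d) mod n then 1 else (0::int))"
    proof (rule sum.cong)
      fix e assume e: "e \<in> S"
      have de: "int (nat d + nat e) = d + e" using S_range[OF d] S_range[OF e] by simp
      have "((d + e) mod n = y) = (e = (y - d) mod n)"
      proof
        assume "(d + e) mod n = y"
        then have "(y - d) mod n = ((d + e) mod n - d) mod n" by simp
        also have "\<dots> = e mod n" by (simp add: mod_diff_left_eq)
        also have "\<dots> = e" using S_range[OF e] by simp
        finally show "e = (y - d) mod n" by simp
      next
        assume "e = (y - d) mod n"
        then have "(d + e) mod n = (d + (y - d)) mod n" by (simp add: mod_add_right_eq)
        then show "(d + e) mod n = y" using y by simp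
      qed
      then show "(if int (nat d + nat e) mod n = y then 1 else 0) = (if e = (y - d) mod n then 1 else (0::int))"
        unfolding de by simp
    qed simp
    also have "\<dots> = (if (y - d) mod n \<in> S then 1 else (0::int))" using finS by (simp add: sum.delta)
    finally show "(\<Sum>e\<in>S. if int (nat d + nat e) mod n = y then 1 else (0::int)) = (if (y - d) mod n \<in> S then 1 else 0)" .
  qed simp
  also have "\<dots> = int (card {z \<in> S. (y - z) mod n \<in> S})"
    using finS by (simp add: sum.If_cases Int_def)
  finally show ?thesis .
qed

lemma count_y: "0 \<le> y \<Longrightarrow> y < n \<Longrightarrow>
   card {z \<in> S. (y - z) mod n \<in> S} = (if y = 0 then k else if y \<in> S then lam else mu)"
proof -
  assume y: "0 \<le> y" "y < n"
  have e: "card {z \<in> S. (y - z) mod n \<in> S} = card (Nb n S 0 \<inter> Nb n S y)" using common0 by simp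
  show ?thesis
  proof (cases "y = 0")
    case True
    then show ?thesis using e deg[of 0] npos by simp
  next
    case False
    show ?thesis
    proof (cases "y \<in> S")
      case True
      have "(0 - y) mod n \<in> S" using sym_iff y True by simp
      then show ?thesis using e lam[of 0 y] y npos False True by simp
    next
      case nS: False
      have "(0 - y) mod n \<notin> S" using sym_iff y nS by simp
      then show ?thesis using e mu[of 0 y] y npos False nS by simp
    qed
  qed
qed

lemma red_const': "0 \<le> y \<Longrightarrow> y < n \<Longrightarrow> red n [:c:] y = (if y = 0 then c else 0)"
  using red_const[of n c y] npos by auto

definition "alpha = int lam - int mu"
definition "beta = int k - int mu"

lemma red_cmult: "red n ([:c:] * A) y = c * red n A y"
  by (simp add: red_smult)

lemma ring_id: "(x::'a::comm_ring_1)^(Suc j) - ((a*u+v)*x + b*u + (m*u + kk*w)*g) =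
   x*(x^j - (u*x + v + w*g)) + u*(x*x - (a*x + b + m*g)) + w*(x*g - kk*g)"
  by (simp add: algebra_simps)

lemma F1: "Mp n dvd P * P - ([:alpha:] * P + [:beta:] + [:int mu:] * Gp)"
proof (rule red_eq_imp_dvd[OF npos])
  fix y assume y: "0 \<le> y" "y < n"
  have "0 \<notin> S" using Ssub by auto
  then show "red n (P * P) y = red n ([:alpha:] * P + [:beta:] + [:int mu:] * Gp) y"
    unfolding red_add red_cmult red_PP[OF y] count_y[OF y] red_P[OF y] red_Gp[OF y] red_const'[OF y]
      alpha_def beta_def
    by auto
qed

lemma F2: "Mp n dvd P * Gp - [:int k:] * Gp"
proof (rule red_eq_imp_dvd[OF npos])
  fix y assume y: "0 \<le> y" "y < n"
  have "P * Gp = (\<Sum>d\<in>S. monom 1 (nat d) * Gp)" unfolding P_def by (simp add: sum_distrib_right)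
  then have "red n (P * Gp) y = (\<Sum>d\<in>S. 1)" by (simp add: red_sum[OF finS] red_monom_Gp[OF y])
  then show "red n (P * Gp) y = red n ([:int k:] * Gp) y"
    using cardS red_Gp[OF y] by (simp add: red_smult)
qed

lemma F3: "\<exists>W. Mp n dvd P ^ j - ([:fst (UV alpha beta j):] * P + [:snd (UV alpha beta j):] + [:W:] * Gp)"
proof (induction j)
  case 0
  have "P ^ 0 - ([:fst (UV alpha beta 0):] * P + [:snd (UV alpha beta 0):] + [:0:] * Gp) = 0"
    by (simp add: one_pCons)
  then show ?case by (intro exI[of _ 0]) (simp only: dvd_0_right)
next
  case (Suc j)
  obtain W where W: "Mp n dvd P ^ j - ([:fst (UV alpha beta j):] * P + [:snd (UV alpha beta j):] + [:W:] * Gp)"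
    using Suc by blast
  define U where "U = fst (UV alpha beta j)"
  define V where "V = snd (UV alpha beta j)"
  have c1: "[:fst (UV alpha beta (Suc j)):] = [:alpha:] * [:U:] + [:V:]"
    unfolding U_def V_def by simp
  have c2: "[:snd (UV alpha beta (Suc j)):] = [:beta:] * [:U:]"
    unfolding U_def V_def by simp
  have c3: "[:int mu * U + int k * W:] = [:int mu:] * [:U:] + [:int k:] * [:W:]" by simp
  have e: "P ^ Suc j - ([:fst (UV alpha beta (Suc j)):] * P + [:snd (UV alpha beta (Suc j)):] + [:int mu * U + int k * W:] * Gp)
    = P * (P ^ j - ([:U:] * P + [:V:] + [:W:] * Gp)) + [:U:] * (P * P - ([:alpha:] * P + [:beta:] + [:int mu:] * Gp))
      + [:W:] * (P * Gp - [:int k:] * Gp)"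
    unfolding c1 c2 c3 by (rule ring_id)
  have "Mp n dvd P * (P ^ j - ([:U:] * P + [:V:] + [:W:] * Gp)) + [:U:] * (P * P - ([:alpha:] * P + [:beta:] + [:int mu:] * Gp))
      + [:W:] * (P * Gp - [:int k:] * Gp)"
    using W F1 F2 unfolding U_def V_def
    by (intro dvd_add dvd_mult) auto
  then show ?case unfolding e[symmetric] by blast
qed

lemma extraction:
  assumes q: "prime q"
  shows "\<exists>W. \<forall>y. 0 \<le> y \<longrightarrow> y < n \<longrightarrow> int q dvd
     int (card {d \<in> S. (int q * d) mod n = y}) - (fst (UV alpha beta q) * (if y \<in> S then 1 else 0)
        + (if y = 0 then snd (UV alpha beta q) else 0) + W)"
proof -
  obtain W where W: "Mp n dvd P ^ q - ([:fst (UV alpha beta q):] * P + [:snd (UV alpha beta q):] + [:W:] * Gp)"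
    using F3 by blast
  then obtain Q where Q: "P ^ q - ([:fst (UV alpha beta q):] * P + [:snd (UV alpha beta q):] + [:W:] * Gp) = Mp n * Q"
    by (auto elim: dvdE)
  define Pq where "Pq = (\<Sum>d\<in>nat ` S. monom (1::int) (q * d))"
  obtain R where R: "(\<Sum>d\<in>nat ` S. monom (1::int) d) ^ q = Pq + smult (int q) R"
    using frob_poly[OF q, of "nat ` S"] finS unfolding Pq_def by blast
  have inj: "inj_on nat S"
  proof (rule inj_onI)
    fix x y assume "x \<in> S" "y \<in> S" "nat x = nat y"
    then show "x = y" using S_range[of x] S_range[of y] by (metis int_nat_eq less_le)
  qed
  have PP: "P = (\<Sum>d\<in>nat ` S. monom (1::int) d)" unfolding P_def by (simp add: sum.reindex[OF inj])
  define T where "T = [:fst (UV alpha beta q):] * P + [:snd (UV alpha beta q):] + [:W:] * Gp"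
  have Q': "P ^ q - T = Mp n * Q" using Q unfolding T_def .
  have Pq: "Pq = P ^ q - smult (int q) R" using R PP by simp
  have key: "Pq - T = Mp n * Q - smult (int q) R"
  proof -
    have "Pq - T = (P ^ q - T) - smult (int q) R" unfolding Pq by simp
    also have "\<dots> = Mp n * Q - smult (int q) R" unfolding Q' ..
    finally show ?thesis .
  qed
  show ?thesis
  proof (intro exI[of _ W] allI impI)
    fix y assume y: "0 \<le> y" "y < n"
    have rPq: "red n Pq y = int (card {d \<in> S. (int q * d) mod n = y})"
    proof -
      have "red n Pq y = (\<Sum>d\<in>S. red n (monom 1 (q * nat d)) y)"
        unfolding Pq_def sum.reindex[OF inj] o_def by (rule red_sum[OF finS])
      also have "\<dots> = (\<Sum>d\<in>S. if (int q * d) mod n = y then 1 else 0)"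
      proof (rule sum.cong)
        fix d assume "d \<in> S"
        then have "0 < d" using S_range by auto
        then show "red n (monom 1 (q * nat d)) y = (if (int q * d) mod n = y then 1 else 0)"
          by (simp add: red_monom)
      qed simp
      also have "\<dots> = int (card {d \<in> S. (int q * d) mod n = y})"
        using finS by (simp add: sum.If_cases Int_def)
      finally show ?thesis .
    qed
    have "red n (Pq - T) y = - (int q * red n R y)"
      unfolding key by (simp add: red_diff red_Mp[OF npos] red_smult)
    then have "int (card {d \<in> S. (int q * d) mod n = y}) - (fst (UV alpha beta q) * (if y \<in> S then 1 else 0)
        + (if y = 0 then snd (UV alpha beta q) else 0) + W) = - (int q * red n R y)"
      unfolding T_def red_diff red_add red_cmult rPq red_P[OF y] red_Gp[OF y] red_const'[OF y] by simp
    then have "int (card {d \<in> S. (int q * d) mod n = y}) - (fst (UV alpha beta q) * (if y \<in> S then 1 else 0)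
        + (if y = 0 then snd (UV alpha beta q) else 0) + W) = int q * (- red n R y)" by simp
    then show "int q dvd int (card {d \<in> S. (int q * d) mod n = y}) - (fst (UV alpha beta q) * (if y \<in> S then 1 else 0)
        + (if y = 0 then snd (UV alpha beta q) else 0) + W)"
      by (rule dvdI)
  qed
qed

end

context cayley
begin

lemma Nb_sub: "Nb n S u \<subseteq> {0..<n}" unfolding Nb_def by auto

lemma finNb: "finite (Nb n S u)" using Nb_sub finite_subset by blast

lemma Nb_iff: "z \<in> Nb n S u \<longleftrightarrow> 0 \<le> z \<and> z < n \<and> (u - z) mod n \<in> S" unfolding Nb_def by auto

lemma zero_notin: "0 \<notin> S" using Ssub by auto

lemma twins_nonadj:
  assumes "0 < u" "u < n" "u \<notin> S" "Nb n S u = S" and "mu < k"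
  shows False
proof -
  have "(0 - u) mod n \<notin> S" using sym_iff[of u] assms by simp
  then have "card (Nb n S 0 \<inter> Nb n S u) = mu" using mu[of 0 u] assms npos by simp
  then show False using assms cardS Nb0 by simp
qed

lemma lam_km1_false:
  assumes "lam = k - 1" "0 < mu" "0 < t" "t < n" "t \<notin> S"
  shows False
proof -
  have "(0 - t) mod n \<notin> S" using sym_iff[of t] assms by simp
  then have "card (Nb n S 0 \<inter> Nb n S t) = mu" using mu[of 0 t] assms npos by simp
  then have "Nb n S 0 \<inter> Nb n S t \<noteq> {}" using assms(2) by auto
  then obtain z where z: "z \<in> S" "z \<in> Nb n S t" unfolding Nb0 by auto
  have z2: "0 \<le> z" "z < n" "(t - z) mod n \<in> S" using z(2) unfolding Nb_iff by auto
  have "(0 - z) mod n \<in> S" using sym_iff[of z] z z2 by simp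
  then have c: "card (Nb n S 0 \<inter> Nb n S z) = lam" using lam[of 0 z] z2 npos by simp
  have sub: "Nb n S 0 \<inter> Nb n S z \<subseteq> Nb n S z - {0}" using zero_notin Nb0 by auto
  have "0 \<in> Nb n S z" using z z2 npos unfolding Nb_iff by simp
  then have "card (Nb n S z - {0}) = k - 1" using deg[of z] z2 finNb by simp
  then have eq: "Nb n S 0 \<inter> Nb n S z = Nb n S z - {0}"
    using card_subset_eq[OF _ sub] finNb c assms(1) by auto
  have "(z - t) mod n \<in> S" using z2(3) sym_diff by blast
  then have "t \<in> Nb n S z" using assms unfolding Nb_iff by simp
  then have "t \<in> Nb n S 0" using eq assms(3) by auto
  then show False using Nb0 assms by simp
qed

lemma mod_eq_in_range:
  assumes "0 \<le> e" "e < n" "0 \<le> d" "d < n" "n dvd e - d"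
  shows "e = d"
proof (rule ccontr)
  assume "e \<noteq> d"
  then have "\<bar>n\<bar> \<le> \<bar>e - d\<bar>" using assms(5) by (intro dvd_imp_le_int) auto
  then show False using assms by auto
qed

end

locale cayley_main = cayley +
  fixes theta0 t :: int
  assumes theta0: "theta0^2 = alpha * theta0 + beta"
    and mupos: "0 < mu" and muk: "mu < k"
    and t: "0 < t" "t < n" "t \<notin> S"
begin

definition "DD = theta0 - (alpha - theta0)"

lemma DD_nz: "DD \<noteq> 0"
proof
  assume "DD = 0"
  then have "alpha = 2 * theta0" unfolding DD_def by simp
  then have "beta = - (theta0^2)" using theta0 by (simp add: power2_eq_square)
  moreover have "beta > 0" unfolding beta_def using muk by simp
  ultimately show False by (smt (verit) zero_le_power2)
qed

lemma mult_prime_closed: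
  assumes q: "prime q" and qn: "\<not> int q dvd n" and qD: "\<not> int q dvd DD" and d: "d \<in> S"
  shows "(int q * d) mod n \<in> S"
proof -
  obtain W where W: "\<And>y. 0 \<le> y \<Longrightarrow> y < n \<Longrightarrow> int q dvd int (card {d\<in>S. (int q*d) mod n = y})
      - (fst (UV alpha beta q) * (if y\<in>S then 1 else 0) + (if y = 0 then snd (UV alpha beta q) else 0) + W)"
    using extraction[OF q] by blast
  have U1: "int q dvd fst (UV alpha beta q) - 1" and V0: "int q dvd snd (UV alpha beta q)"
    using U_cong1[OF q theta0] qD unfolding DD_def by auto
  have qi: "prime (int q)" using q by simp
  have cop: "coprime n (int q)" using prime_imp_coprime[OF qi qn] by (simp add: coprime_commute)
  have c0: "{e\<in>S. (int q*e) mod n = 0} = {}"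
  proof (rule ccontr)
    assume "{e\<in>S. (int q*e) mod n = 0} \<noteq> {}"
    then obtain e where e: "e \<in> S" "(int q * e) mod n = 0" by auto
    then have "n dvd int q * e" by auto
    then have "n dvd e" using cop by (simp add: coprime_dvd_mult_right_iff)
    then have "n \<le> e" using S_range[OF e(1)] by (simp add: zdvd_imp_le)
    then show False using S_range[OF e(1)] by simp
  qed
  have "int q dvd 0 - (snd (UV alpha beta q) + W)" using W[of 0] npos c0 zero_notin by simp
  then have Wq: "int q dvd W" using V0 by (metis add_diff_cancel_left' diff_0 dvd_diff dvd_minus_iff)
  define y where "y = (int q * d) mod n"
  have y: "0 \<le> y" "y < n" using npos unfolding y_def by auto
  have c1: "{e\<in>S. (int q*e) mod n = y} = {d}"
  proof (intro equalityI subsetI)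
    fix e assume "e \<in> {e\<in>S. (int q*e) mod n = y}"
    then have e: "e \<in> S" "(int q * e) mod n = (int q * d) mod n" unfolding y_def by auto
    then have "n dvd int q * e - int q * d" by (simp add: mod_eq_dvd_iff)
    then have "n dvd int q * (e - d)" by (simp add: right_diff_distrib)
    then have "n dvd e - d" using cop by (simp add: coprime_dvd_mult_right_iff)
    then show "e \<in> {d}" using mod_eq_in_range S_range[OF e(1)] S_range[OF d] by force
  qed (use d y_def in auto)
  show ?thesis
  proof (rule ccontr)
    assume ny: "(int q * d) mod n \<notin> S"
    have "int q dvd 1 - ((if y = 0 then snd (UV alpha beta q) else 0) + W)"
      using W[OF y] c1 ny unfolding y_def by simp
    moreover have "int q dvd ((if y = 0 then snd (UV alpha beta q) else 0) + W)"
      using V0 Wq by auto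
    ultimately have "int q dvd 1" by (metis diff_add_cancel dvd_add)
    then show False using qi by (simp add: prime_int_iff)
  qed
qed

definition "NN = nat \<bar>n * DD\<bar>"

lemma NN_pos: "NN > 0" unfolding NN_def using npos DD_nz by simp

lemma unit_closed:
  assumes "x > 0" "coprime x NN" "d \<in> S"
  shows "(int x * d) mod n \<in> S"
proof (rule mult_closed_all[of S n NN, OF _ _ assms])
  show "S \<subseteq> {0..<n}" using Ssub by auto
next
  fix q d assume q: "prime q" "\<not> q dvd NN" "d \<in> S"
  have "\<not> int q dvd n"
  proof
    assume "int q dvd n"
    then have "int q dvd \<bar>n * DD\<bar>" by simp
    then have "int q dvd int NN" unfolding NN_def by simp
    then have "q dvd NN" by simp
    then show False using q by simp
  qed
  moreover have "\<not> int q dvd DD"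
  proof
    assume "int q dvd DD"
    then have "int q dvd \<bar>n * DD\<bar>" by simp
    then have "int q dvd int NN" unfolding NN_def by simp
    then have "q dvd NN" by simp
    then show False using q by simp
  qed
  ultimately show "(int q * d) mod n \<in> S" using mult_prime_closed q by blast
qed

end

context cayley_main
begin

lemma count_nonmult_zero:
  assumes p: "int p dvd n" "\<not> int p dvd y"
  shows "{e\<in>S. (int p * e) mod n = y} = {}"
proof (rule ccontr)
  assume "{e\<in>S. (int p * e) mod n = y} \<noteq> {}"
  then obtain e where "(int p * e) mod n = y" by auto
  moreover have "int p dvd (int p * e) mod n" using p(1) by (simp add: dvd_mod_iff)
  ultimately show False using p(2) by simp
qed

lemma caseB_periodic:
  assumes p: "prime p" "int p dvd n" "int p dvd DD" and d: "d \<in> S" "\<not> (n div int p) dvd d"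
  shows "(d + n div int p) mod n \<in> S"
proof -
  define m where "m = n div int p"
  have nm: "n = int p * m" unfolding m_def using p(2) by simp
  have p2: "int p \<ge> 2" using p(1) prime_ge_2_nat by auto
  have "0 < int p * m" using nm npos by simp
  then have mpos: "m > 0" using p2 zero_less_mult_pos by (metis less_le_trans zero_less_numeral)
  have "2 * 1 \<le> int p * m" using mult_mono[of 2 "int p" 1 m] p2 mpos by simp
  then have n2: "1 < n" using nm by simp
  obtain W where W: "\<And>y. 0 \<le> y \<Longrightarrow> y < n \<Longrightarrow> int p dvd int (card {d\<in>S. (int p*d) mod n = y})
      - (fst (UV alpha beta p) * (if y\<in>S then 1 else 0) + (if y = 0 then snd (UV alpha beta p) else 0) + W)"
    using extraction[OF p(1)] by blast
  have U0: "int p dvd fst (UV alpha beta p)" using U_cong0[OF p(1) theta0] p(3) unfolding DD_def by auto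
  have np1: "\<not> int p dvd 1" using p2 by (auto dest: zdvd_imp_le)
  have "int p dvd 0 - (fst (UV alpha beta p) * (if 1\<in>S then 1 else 0) + W)"
    using W[of 1] n2 count_nonmult_zero[OF p(2) np1] by simp
  then have Wp: "int p dvd W" using U0
    by (metis diff_0 dvd_minus_iff dvd_add_right_iff dvd_mult2)
  define y where "y = (int p * d) mod n"
  have y: "0 \<le> y" "y < n" using npos unfolding y_def by auto
  have yne: "y \<noteq> 0"
  proof
    assume "y = 0"
    then have "int p * m dvd int p * d" unfolding y_def nm by auto
    then have "m dvd d" using p2 by simp
    then show False using d(2) unfolding m_def by simp
  qed
  define A where "A = {e\<in>S. (int p*e) mod n = y}"
  define F where "F = {e\<in>{0..<n}. (int p*e) mod n = y}"
  have AF: "A \<subseteq> F" unfolding A_def F_def using Ssub by auto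
  have finF: "finite F" unfolding F_def by (rule finite_subset[of _ "{0..<n}"]) auto
  have dA: "d \<in> A" unfolding A_def y_def using d by simp
  have "int p dvd int (card A)"
  proof -
    have "int p dvd int (card A) - (fst (UV alpha beta p) * (if y\<in>S then 1 else 0) + W)"
      using W[OF y] yne unfolding A_def by simp
    moreover have "int p dvd fst (UV alpha beta p) * (if y\<in>S then 1 else 0) + W" using U0 Wp by simp
    ultimately show ?thesis by (metis diff_add_cancel dvd_add)
  qed
  then have pA: "p dvd card A" by simp
  have FI: "F \<subseteq> (\<lambda>j. (d + int j * m) mod n) ` {..<p}"
  proof
    fix e assume "e \<in> F"
    then have e: "0 \<le> e" "e < n" "(int p * e) mod n = (int p * d) mod n" unfolding F_def y_def by auto
    then have "int p * m dvd int p * (e - d)" unfolding nm[symmetric] by (simp add: mod_eq_dvd_iff right_diff_distrib)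
    then have "m dvd e - d" using p2 by simp
    then obtain l where l: "e - d = m * l" by (auto elim: dvdE)
    have h: "l - l mod int p = int p * (l div int p)" by (simp add: minus_mod_eq_mult_div)
    have "e - (d + m * (l mod int p)) = m * (l - l mod int p)" using l by (simp add: algebra_simps)
    also have "\<dots> = n * (l div int p)" unfolding h nm by (simp add: algebra_simps)
    finally have "n dvd e - (d + m * (l mod int p))" by simp
    then have "e mod n = (d + m * (l mod int p)) mod n" by (simp add: mod_eq_dvd_iff)
    then have "e = (d + m * (l mod int p)) mod n" using e by simp
    then have "e = (d + int (nat (l mod int p)) * m) mod n" using p2 by (simp add: mult.commute)
    moreover have "nat (l mod int p) < p" using p2 by (simp add: nat_less_iff)
    ultimately show "e \<in> (\<lambda>j. (d + int j * m) mod n) ` {..<p}" by blast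
  qed
  have "card F \<le> p" using card_image_le[of "{..<p}" "\<lambda>j. (d + int j * m) mod n"] card_mono[OF _ FI] by simp
  moreover have "card A \<le> card F" using card_mono[OF finF AF] .
  moreover have "card A > 0" using dA finF AF finite_subset by (metis card_gt_0_iff empty_iff)
  ultimately have "card A = card F" using pA by (metis dvd_imp_le le_antisym order.trans)
  then have "A = F" using card_subset_eq[OF finF AF] by simp
  moreover have "(d + m) mod n \<in> F"
  proof -
    have "(int p * ((d + m) mod n)) mod n = (int p * (d + m)) mod n" by (simp add: mod_mult_right_eq)
    also have "int p * (d + m) = int p * d + n" unfolding nm by (simp add: distrib_left)
    finally show ?thesis unfolding F_def y_def using npos by simp
  qed
  ultimately show ?thesis unfolding A_def m_def by auto
qed

lemma caseB_H:
  assumes p: "prime p" "int p dvd n" and ij: "1 \<le> i" "i < int p" "1 \<le> j" "j < int p"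
    and iS: "i * (n div int p) \<in> S"
  shows "j * (n div int p) \<in> S"
proof -
  define m where "m = n div int p"
  have nm: "n = int p * m" unfolding m_def using p(2) by simp
  have p2: "int p \<ge> 2" using p(1) prime_ge_2_nat by auto
  have "0 < int p * m" using nm npos by simp
  then have mpos: "m > 0" using p2 zero_less_mult_pos by (metis less_le_trans zero_less_numeral)
  have pi: "prime (int p)" using p(1) by simp
  have ni: "\<not> int p dvd i" using ij by (auto dest: zdvd_imp_le)
  have nj: "\<not> int p dvd j" using ij by (auto dest: zdvd_imp_le)
  have "coprime i (int p)" using prime_imp_coprime[OF pi ni] by (simp add: coprime_commute)
  then obtain i' where i': "[i * i' = 1] (mod int p)" using cong_solve_coprime_int by blast
  have ni': "\<not> int p dvd i'"
  proof
    assume "int p dvd i'"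
    then have "int p dvd i * i'" by simp
    then have "int p dvd 1" using i' by (metis cong_dvd_iff)
    then show False using pi by (simp add: prime_int_iff)
  qed
  define a where "a = (i' * j) mod int p"
  have a0: "0 \<le> a" unfolding a_def using p2 by simp
  have na: "\<not> int p dvd a" unfolding a_def using ni' nj pi
    by (simp add: dvd_mod_iff prime_dvd_mult_iff)
  have "coprime (nat a) p"
  proof -
    have "coprime (int p) a" using prime_imp_coprime[OF pi na] .
    then have "coprime a (int p)" by (simp add: coprime_commute)
    then show ?thesis using a0 by (metis coprime_int_iff int_nat_eq)
  qed
  then obtain x where x: "x > 0" "[x = nat a] (mod p)" "coprime x NN"
    using exists_coprime_in_class[of p "nat a" NN] NN_pos p2 by auto
  have "(int x * (i * m)) mod n \<in> S" using unit_closed[OF x(1) x(3)] iS unfolding m_def by simp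
  moreover have "(int x * (i * m)) mod n = j * m"
  proof -
    have "[int x = a] (mod int p)" using x(2) a0 by (metis cong_int_iff int_nat_eq)
    then have "[int x * i = a * i] (mod int p)" by (rule cong_mult) simp
    moreover have "[a * i = (i' * j) * i] (mod int p)" unfolding a_def by (simp add: cong_def mod_mult_left_eq)
    moreover have "[(i' * j) * i = j * (i * i')] (mod int p)" by (simp add: ac_simps)
    moreover have "[j * (i * i') = j * 1] (mod int p)" using i' by (rule cong_mult[OF cong_refl])
    ultimately have "[int x * i = j] (mod int p)" by (metis cong_trans mult_1_right)
    then have "int p dvd int x * i - j" by (simp add: cong_iff_dvd_diff)
    then have "int p * m dvd (int x * i - j) * m" by simp
    then have "n dvd int x * (i * m) - j * m" unfolding nm by (simp add: algebra_simps)
    then have "(int x * (i * m)) mod n = (j * m) mod n" by (simp add: mod_eq_dvd_iff)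
    moreover have "0 \<le> j * m" "j * m < n" using ij mpos nm by auto
    ultimately show ?thesis by simp
  qed
  ultimately show ?thesis unfolding m_def by simp
qed

end

context cayley_main
begin

lemma caseB_false:
  assumes p: "prime p" "int p dvd n" "int p dvd DD"
  shows False
proof -
  define m where "m = n div int p"
  have nm: "n = int p * m" unfolding m_def using p(2) by simp
  have p2: "int p \<ge> 2" using p(1) prime_ge_2_nat by auto
  have "0 < int p * m" using nm npos by simp
  then have mpos: "m > 0" using p2 zero_less_mult_pos by (metis less_le_trans zero_less_numeral)
  have "m * 1 < m * int p" using mpos p2 by (intro mult_strict_left_mono) auto
  then have mn: "m < n" using nm by (simp add: mult.commute)
  have multH: "\<exists>j. 1 \<le> j \<and> j < int p \<and> d = j * m" if h: "0 < d" "d < n" "m dvd d" for d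
  proof -
    obtain j where j: "d = m * j" using h(3) by (auto elim: dvdE)
    have "0 < m * j" using j h by simp
    then have "j > 0" using mpos by (simp add: zero_less_mult_iff)
    moreover have "m * j < m * int p" using j h nm by (simp add: mult.commute)
    then have "j < int p" using mpos by simp
    ultimately show ?thesis using j by (intro exI[of _ j]) (auto simp: mult.commute)
  qed
  have per: "(d + m) mod n \<in> S" if "d \<in> S" "\<not> m dvd d" for d
    using caseB_periodic[OF p that(1)] that(2) unfolding m_def by simp
  show False
  proof (cases "m \<in> S")
    case False
    have noH: "\<not> m dvd d" if dS: "d \<in> S" for d
    proof
      assume "m dvd d"
      then obtain j where j: "1 \<le> j" "j < int p" "d = j * m" using multH S_range[OF dS] by blast
      have "1 * (n div int p) \<in> S"
        using caseB_H[OF p(1,2), of j 1] j dS p2 unfolding m_def by simp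
      then show False using False unfolding m_def by simp
    qed
    have "Nb n S m = S"
    proof (intro equalityI subsetI)
      fix w assume "w \<in> Nb n S m"
      then have w: "0 \<le> w" "w < n" "(m - w) mod n \<in> S" unfolding Nb_iff by auto
      have d: "(w - m) mod n \<in> S" using w(3) sym_diff by blast
      have "((w - m) mod n + m) mod n \<in> S" using per[OF d noH[OF d]] .
      moreover have "((w - m) mod n + m) mod n = w" using w by (simp add: mod_add_left_eq)
      ultimately show "w \<in> S" by simp
    next
      fix w assume w: "w \<in> S"
      have d: "(- w) mod n \<in> S" using Ssym[OF w] .
      have "((- w) mod n + m) mod n \<in> S" using per[OF d noH[OF d]] .
      moreover have "((- w) mod n + m) mod n = (m - w) mod n" by (simp add: mod_add_left_eq)
      ultimately show "w \<in> Nb n S m" using S_range[OF w] unfolding Nb_iff by simp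
    qed
    then show False using twins_nonadj[of m] mpos mn False muk by simp
  next
    case True
    have allH: "j * m \<in> S" if "1 \<le> j" "j < int p" for j
      using caseB_H[OF p(1,2), of 1 j] True that p2 unfolding m_def by simp
    have mdvdn: "m dvd n" using nm by simp
    have cl: "(d + m) mod n \<in> insert 0 S" if "0 \<le> d" "d < n" "d \<in> insert 0 S" for d
    proof (cases "m dvd d")
      case True
      have "m dvd (d + m) mod n" using True mdvdn by (simp add: dvd_mod_iff)
      moreover have "0 \<le> (d + m) mod n" "(d + m) mod n < n" using npos by auto
      ultimately show ?thesis
      proof (cases "(d + m) mod n = 0")
        case False
        then obtain j where "1 \<le> j" "j < int p" "(d + m) mod n = j * m"
          using multH \<open>m dvd (d + m) mod n\<close> \<open>0 \<le> (d + m) mod n\<close> \<open>(d + m) mod n < n\<close> by force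
        then show ?thesis using allH by simp
      qed simp
    next
      case False
      then have "d \<in> S" using that(3) by auto
      then show ?thesis using per False by simp
    qed
    have "Nb n S 0 \<inter> Nb n S m = S - {m}"
    proof (intro equalityI subsetI)
      fix z assume "z \<in> Nb n S 0 \<inter> Nb n S m"
      then have z: "z \<in> S" "(m - z) mod n \<in> S" unfolding Nb0 by (auto simp: Nb_iff)
      have "z \<noteq> m" using z zero_notin by auto
      then show "z \<in> S - {m}" using z by simp
    next
      fix z assume "z \<in> S - {m}"
      then have z: "z \<in> S" "z \<noteq> m" by auto
      have "(- z) mod n \<in> insert 0 S" using Ssym[OF z(1)] by simp
      then have "((- z) mod n + m) mod n \<in> insert 0 S" using cl npos by simp
      moreover have "((- z) mod n + m) mod n = (m - z) mod n" by (simp add: mod_add_left_eq)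
      moreover have "(m - z) mod n \<noteq> 0"
      proof
        assume "(m - z) mod n = 0"
        then have "n dvd m - z" by auto
        then have "m = z" using mod_eq_in_range[of m z] S_range[OF z(1)] mpos mn by simp
        then show False using z by simp
      qed
      ultimately have "(m - z) mod n \<in> S" by simp
      then show "z \<in> Nb n S 0 \<inter> Nb n S m" using z S_range[OF z(1)] Nb0 by (auto simp: Nb_iff)
    qed
    then have "card (Nb n S 0 \<inter> Nb n S m) = k - 1" using cardS True finS by simp
    moreover have "(0 - m) mod n \<in> S" using sym_iff[of m] True mpos mn by simp
    then have "card (Nb n S 0 \<inter> Nb n S m) = lam" using lam[of 0 m] mpos mn npos by simp
    ultimately show False using lam_km1_false t mupos by simp
  qed
qed

lemma caseA_uniform:
  assumes p: "prime p" "int p dvd n" "\<not> int p dvd DD" and y: "0 \<le> y" "y < n" "\<not> int p dvd y"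
    and n2: "1 < n"
  shows "y \<in> S \<longleftrightarrow> 1 \<in> S"
proof -
  obtain W where W: "\<And>y. 0 \<le> y \<Longrightarrow> y < n \<Longrightarrow> int p dvd int (card {d\<in>S. (int p*d) mod n = y})
      - (fst (UV alpha beta p) * (if y\<in>S then 1 else 0) + (if y = 0 then snd (UV alpha beta p) else 0) + W)"
    using extraction[OF p(1)] by blast
  have U1: "int p dvd fst (UV alpha beta p) - 1"
    using U_cong1[OF p(1) theta0] p(3) unfolding DD_def by auto
  have p2: "int p \<ge> 2" using p(1) prime_ge_2_nat by auto
  have np1: "\<not> int p dvd 1" using p2 by (auto dest: zdvd_imp_le)
  define U where "U = fst (UV alpha beta p)"
  define b1 where "b1 = (if 1 \<in> S then 1 else (0::int))"
  define by' where "by' = (if y \<in> S then 1 else (0::int))"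
  have h1: "int p dvd 0 - (U * b1 + W)"
    using W[of 1] n2 count_nonmult_zero[OF p(2) np1] unfolding U_def b1_def by simp
  have y0: "y \<noteq> 0" using y by auto
  have hy: "int p dvd 0 - (U * by' + W)"
    using W[OF y(1,2)] count_nonmult_zero[OF p(2) y(3)] y0 unfolding U_def by'_def by simp
  have "int p dvd (0 - (U * b1 + W)) - (0 - (U * by' + W))" using h1 hy by (rule dvd_diff)
  then have "int p dvd U * (by' - b1)" by (simp add: algebra_simps)
  moreover have "U * (by' - b1) = (by' - b1) + (U - 1) * (by' - b1)" by (simp add: algebra_simps)
  moreover have "int p dvd (U - 1) * (by' - b1)" using U1 unfolding U_def by simp
  ultimately have "int p dvd (by' - b1)" by (metis dvd_add_right_iff add.commute)
  then show ?thesis unfolding by'_def b1_def using np1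
    by (cases "y \<in> S"; cases "1 \<in> S") (auto simp: dvd_minus_iff)
qed

lemma caseA_false:
  assumes p: "prime p" "int p dvd n" "\<not> int p dvd DD"
  shows False
proof -
  have p2: "int p \<ge> 2" using p(1) prime_ge_2_nat by auto
  have "int p \<le> n" using p(2) npos by (simp add: zdvd_imp_le)
  then have n2: "1 < n" using p2 by simp
  have np1: "\<not> int p dvd 1" using p2 by (auto dest: zdvd_imp_le)
  have modp: "int p dvd x mod n \<longleftrightarrow> int p dvd x" for x using p(2) by (simp add: dvd_mod_iff)
  have unif: "y \<in> S \<longleftrightarrow> 1 \<in> S" if "0 \<le> y" "y < n" "\<not> int p dvd y" for y
    using caseA_uniform[OF p that n2] .
  show False
  proof (cases "1 \<in> S")
    case False
    have "Nb n S 0 \<inter> Nb n S 1 = {}"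
    proof (rule ccontr)
      assume "Nb n S 0 \<inter> Nb n S 1 \<noteq> {}"
      then obtain z where z: "z \<in> S" "0 \<le> z" "z < n" "(1 - z) mod n \<in> S" unfolding Nb0 by (auto simp: Nb_iff)
      have pz: "int p dvd z" using unif[of z] z False by auto
      have "0 \<le> (1 - z) mod n" "(1 - z) mod n < n" using npos by auto
      then have "int p dvd (1 - z) mod n" using unif[of "(1 - z) mod n"] z False by auto
      then have "int p dvd 1 - z" using modp by simp
      then have "int p dvd (1 - z) + z" using pz by (rule dvd_add)
      then show False using np1 by simp
    qed
    moreover have "(0 - 1) mod n \<notin> S" using sym_iff[of 1] False n2 by simp
    then have "card (Nb n S 0 \<inter> Nb n S 1) = mu" using mu[of 0 1] n2 by simp
    ultimately show False using mupos by simp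
  next
    case True
    have nonm: "y \<in> S" if "0 \<le> y" "y < n" "\<not> int p dvd y" for y using unif[OF that] True by simp
    define KS where "KS = {u \<in> {0..<n}. int p dvd u \<and> u \<notin> S}"
    have finKS: "finite KS" unfolding KS_def by (rule finite_subset[of _ "{0..<n}"]) auto
    have phi_inv: "(c - (c - w) mod n) mod n = w" if "0 \<le> w" "w < n" for c w
    proof -
      have "(c - (c - w) mod n) mod n = (c - (c - w)) mod n" by (simp add: mod_diff_right_eq)
      then show ?thesis using that by simp
    qed
    have inj: "inj_on (\<lambda>w. (c - w) mod n) A" if "A \<subseteq> {0..<n}" for c A
    proof (rule inj_onI)
      fix x y assume xy: "x \<in> A" "y \<in> A" "(c - x) mod n = (c - y) mod n"
      have "x = (c - (c - x) mod n) mod n" using phi_inv[of x c] xy that by auto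
      also have "\<dots> = (c - (c - y) mod n) mod n" using xy by simp
      also have "\<dots> = y" using phi_inv[of y c] xy that by auto
      finally show "x = y" .
    qed
    have e1: "(\<lambda>w. (1 - w) mod n) ` KS = Nb n S 0 - Nb n S 1"
    proof (intro equalityI subsetI)
      fix x assume "x \<in> (\<lambda>w. (1 - w) mod n) ` KS"
      then obtain u where u: "u \<in> KS" "x = (1 - u) mod n" by auto
      have u2: "0 \<le> u" "u < n" "int p dvd u" "u \<notin> S" using u(1) unfolding KS_def by auto
      have x: "0 \<le> x" "x < n" using u(2) npos by auto
      have "\<not> int p dvd x"
      proof
        assume "int p dvd x"
        then have "int p dvd 1 - u" using u(2) modp by simp
        then have "int p dvd (1 - u) + u" using u2(3) by (rule dvd_add)
        then show False using np1 by simp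
      qed
      then have "x \<in> S" using nonm x by simp
      moreover have "(1 - x) mod n = u" using u(2) phi_inv[of u 1] u2 by simp
      ultimately show "x \<in> Nb n S 0 - Nb n S 1" using x u2 unfolding Nb0 by (simp add: Nb_iff)
    next
      fix x assume "x \<in> Nb n S 0 - Nb n S 1"
      then have x: "x \<in> S" "(1 - x) mod n \<notin> S" unfolding Nb0 by (auto simp: Nb_iff dest: S_range)
      define u where "u = (1 - x) mod n"
      have u: "0 \<le> u" "u < n" using npos unfolding u_def by auto
      have "int p dvd u" using nonm[OF u] x(2) unfolding u_def by auto
      then have "u \<in> KS" using u x(2) unfolding KS_def u_def by auto
      moreover have "x = (1 - u) mod n" unfolding u_def using phi_inv[of x 1] S_range[OF x(1)] by simp
      ultimately show "x \<in> (\<lambda>w. (1 - w) mod n) ` KS" by blast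
    qed
    have cd: "card (Nb n S 0 - Nb n S z) = k - lam" if "z \<in> S" for z
    proof -
      have "(0 - z) mod n \<in> S" using sym_iff[of z] that S_range[OF that] by simp
      then have "card (Nb n S 0 \<inter> Nb n S z) = lam" using lam[of 0 z] S_range[OF that] npos by simp
      moreover have "card (Nb n S 0) = k" using deg[of 0] npos by simp
      ultimately show ?thesis using card_Diff_subset_Int[of "Nb n S 0" "Nb n S z"] finNb by simp
    qed
    have KSsub: "KS \<subseteq> {0..<n}" unfolding KS_def by auto
    have cKS: "card KS = k - lam"
    proof -
      have "card KS = card ((\<lambda>w. (1 - w) mod n) ` KS)" using card_image[OF inj[OF KSsub]] by simp
      then show ?thesis using e1 cd[OF True] by simp
    qed
    have key: "(z - u) mod n \<in> S" if z: "z \<in> S" "int p dvd z" and u: "u \<in> KS" for z u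
    proof -
      let ?f = "\<lambda>w. (z - w) mod n"
      have sub1: "Nb n S 0 - Nb n S z \<subseteq> {0..<n}" using Nb_sub by auto
      have img: "?f ` (Nb n S 0 - Nb n S z) \<subseteq> KS"
      proof
        fix x assume "x \<in> ?f ` (Nb n S 0 - Nb n S z)"
        then obtain w where w1: "w \<in> Nb n S 0 - Nb n S z" "x = (z - w) mod n" by blast
        have wS: "w \<in> S" using w1(1) Nb0 by auto
        then have "0 \<le> w" "w < n" using S_range[OF wS] by auto
        then have "(z - w) mod n \<notin> S" using w1(1) Nb_iff by auto
        then have w: "w \<in> S" "(z - w) mod n \<notin> S" "x = (z - w) mod n" using wS w1 by auto
        have x: "0 \<le> x" "x < n" using w(3) npos by auto
        have "int p dvd x" using nonm[OF x] w by auto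
        then show "x \<in> KS" unfolding KS_def using x w by auto
      qed
      have "card (?f ` (Nb n S 0 - Nb n S z)) = card KS"
        using card_image[OF inj[OF sub1]] cd[OF z(1)] cKS by simp
      then have "?f ` (Nb n S 0 - Nb n S z) = KS" using card_subset_eq[OF finKS img] by simp
      then obtain w where w: "w \<in> Nb n S 0 - Nb n S z" "u = (z - w) mod n" using u by blast
      have w2S: "w \<in> S" using w(1) Nb0 by auto
      have w2: "w \<in> S" "0 \<le> w" "w < n" using w2S S_range[OF w2S] by auto
      have "(z - u) mod n = w" using w(2) phi_inv[of w z] w2 by simp
      then show ?thesis using w2 by simp
    qed
    have pt: "int p dvd t" using nonm[of t] t by auto
    have tKS: "t \<in> KS" unfolding KS_def using t pt by auto
    have "Nb n S t = S"
    proof (intro equalityI subsetI)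
      fix w assume "w \<in> Nb n S t"
      then have w: "0 \<le> w" "w < n" "(t - w) mod n \<in> S" unfolding Nb_iff by auto
      show "w \<in> S"
      proof (rule ccontr)
        assume wS: "w \<notin> S"
        then have pw: "int p dvd w" using nonm w by auto
        have "int p dvd (t - w) mod n" using pt pw modp by simp
        then have "((t - w) mod n - t) mod n \<in> S" using key[OF w(3) _ tKS] by simp
        moreover have "((t - w) mod n - t) mod n = (- w) mod n" by (simp add: mod_diff_left_eq)
        ultimately have "(- w) mod n \<in> S" by simp
        then show False using sym_iff w wS by simp
      qed
    next
      fix w assume wS: "w \<in> S"
      have w: "0 \<le> w" "w < n" using S_range[OF wS] by auto
      have "(t - w) mod n \<in> S"
      proof (cases "int p dvd w")
        case True
        then have "(w - t) mod n \<in> S" using key[OF wS True tKS] by simp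
        then show ?thesis using sym_diff by blast
      next
        case False
        have "\<not> int p dvd (t - w) mod n"
        proof
          assume "int p dvd (t - w) mod n"
          then have "int p dvd t - w" using modp by simp
          then have "int p dvd t - (t - w)" using pt dvd_diff by blast
          then show False using False by simp
        qed
        moreover have "0 \<le> (t - w) mod n" "(t - w) mod n < n" using npos by auto
        ultimately show ?thesis using nonm by simp
      qed
      then show "w \<in> Nb n S t" using w unfolding Nb_iff by simp
    qed
    then show False using twins_nonadj[of t] t muk by simp
  qed
qed

lemma cayley_false: False
proof -
  have "nat n \<noteq> 1" using t by auto
  then obtain p where p: "prime p" "p dvd nat n" using prime_factor_nat by blast
  have "int p dvd n" using p(2) npos by (metis int_dvd_int_iff int_nat_eq less_le)
  then show False using caseA_false[OF p(1)] caseB_false[OF p(1)] by blast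
qed

end

lemma card_filter_sum: "finite A \<Longrightarrow> card {z \<in> A. P z} = (\<Sum>z\<in>A. if P z then 1 else (0::nat))"
  by (simp add: sum.If_cases Int_def)

lemma double_count:
  assumes sg: "simple_graph V E" and x: "x \<in> V" and C: "C \<subseteq> V"
  shows "(\<Sum>y\<in>nbrs V E x. card (nbrs V E y \<inter> C)) = (\<Sum>z\<in>C. card (nbrs V E x \<inter> nbrs V E z))"
proof -
  have fin: "finite V" using sg unfolding simple_graph_def by auto
  have sym: "\<And>u v. u \<in> V \<Longrightarrow> v \<in> V \<Longrightarrow> E u v \<longleftrightarrow> E v u" using sg unfolding simple_graph_def by auto
  have finN: "finite (nbrs V E x)" using fin unfolding nbrs_def by auto
  have finC: "finite C" using fin C finite_subset by auto
  have "(\<Sum>y\<in>nbrs V E x. card (nbrs V E y \<inter> C)) = (\<Sum>y\<in>nbrs V E x. \<Sum>z\<in>C. if E y z then 1 else 0)"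
  proof (rule sum.cong)
    fix y assume "y \<in> nbrs V E x"
    have "nbrs V E y \<inter> C = {z \<in> C. E y z}" using C unfolding nbrs_def by auto
    then show "card (nbrs V E y \<inter> C) = (\<Sum>z\<in>C. if E y z then 1 else 0)" using card_filter_sum[OF finC] by simp
  qed simp
  also have "\<dots> = (\<Sum>z\<in>C. \<Sum>y\<in>nbrs V E x. if E y z then 1 else 0)" by (rule sum.swap)
  also have "\<dots> = (\<Sum>z\<in>C. card (nbrs V E x \<inter> nbrs V E z))"
  proof (rule sum.cong)
    fix z assume z: "z \<in> C"
    have "nbrs V E x \<inter> nbrs V E z = {y \<in> nbrs V E x. E y z}" using z C sym unfolding nbrs_def by auto
    then show "(\<Sum>y\<in>nbrs V E x. if E y z then 1 else 0) = card (nbrs V E x \<inter> nbrs V E z)"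
      using card_filter_sum[OF finN] by simp
  qed simp
  finally show ?thesis .
qed

lemma clique_theta:
  fixes V :: "'a set" and E :: "'a \<Rightarrow> 'a \<Rightarrow> bool"
  assumes sg: "simple_graph V E" and nc: "\<not> complete_graph V E"
    and reg: "\<And>x. x \<in> V \<Longrightarrow> card (nbrs V E x) = k"
    and lamc: "\<And>x y. x \<in> V \<Longrightarrow> y \<in> V \<Longrightarrow> E x y \<Longrightarrow> card (nbrs V E x \<inter> nbrs V E y) = lam"
    and muc: "\<And>x y. x \<in> V \<Longrightarrow> y \<in> V \<Longrightarrow> x \<noteq> y \<Longrightarrow> \<not> E x y \<Longrightarrow> card (nbrs V E x \<inter> nbrs V E y) = mu"
    and rc: "regular_clique V E C a"
  shows "\<exists>th::int. th^2 = (int lam - int mu) * th + (int k - int mu)"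
proof -
  have fin: "finite V" using sg unfolding simple_graph_def by auto
  have sym: "\<And>u v. u \<in> V \<Longrightarrow> v \<in> V \<Longrightarrow> E u v \<longleftrightarrow> E v u" using sg unfolding simple_graph_def by auto
  have irr: "\<And>u. u \<in> V \<Longrightarrow> \<not> E u u" using sg unfolding simple_graph_def by auto
  have CV: "C \<subseteq> V" and Cne: "C \<noteq> {}" and cl: "\<And>x y. x \<in> C \<Longrightarrow> y \<in> C \<Longrightarrow> x \<noteq> y \<Longrightarrow> E x y"
    and nex: "\<And>x. x \<in> V - C \<Longrightarrow> card (nbrs V E x \<inter> C) = a"
    using rc unfolding regular_clique_def is_clique_def by auto
  have finC: "finite C" using fin CV finite_subset by auto
  define c where "c = card C"
  have cpos: "c \<ge> 1" using Cne finC unfolding c_def by (simp add: Suc_le_eq card_gt_0_iff)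
  have finN: "\<And>x. finite (nbrs V E x)" using fin unfolding nbrs_def by auto
  have NC_in: "nbrs V E y \<inter> C = C - {y}" if "y \<in> C" for y
    using that cl irr CV unfolding nbrs_def by auto
  have lhs: "int (\<Sum>y\<in>nbrs V E x. card (nbrs V E y \<inter> C))
      = (int c - 1) * int (card (nbrs V E x \<inter> C)) + int a * (int k - int (card (nbrs V E x \<inter> C)))"
    if x: "x \<in> V" for x
  proof -
    let ?N = "nbrs V E x"
    have NV: "?N \<subseteq> V" unfolding nbrs_def by auto
    have "(\<Sum>y\<in>?N. card (nbrs V E y \<inter> C)) = (\<Sum>y\<in>?N \<inter> C. card (nbrs V E y \<inter> C)) + (\<Sum>y\<in>?N - C. card (nbrs V E y \<inter> C))"
      by (rule sum.Int_Diff[OF finN])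
    also have "(\<Sum>y\<in>?N \<inter> C. card (nbrs V E y \<inter> C)) = (\<Sum>y\<in>?N \<inter> C. c - 1)"
      by (rule sum.cong) (use NC_in finC c_def in auto)
    also have "(\<Sum>y\<in>?N - C. card (nbrs V E y \<inter> C)) = (\<Sum>y\<in>?N - C. a)"
      by (rule sum.cong) (use nex NV in auto)
    finally have e: "(\<Sum>y\<in>?N. card (nbrs V E y \<inter> C)) = card (?N \<inter> C) * (c - 1) + card (?N - C) * a" by simp
    have e2: "card (?N - C) = k - card (?N \<inter> C)"
      using card_Diff_subset_Int[of ?N C] finN reg[OF x] by simp
    have sle: "card (?N \<inter> C) \<le> k" using card_mono[OF finN[of x], of "?N \<inter> C"] reg[OF x] by auto
    have "int (\<Sum>y\<in>?N. card (nbrs V E y \<inter> C)) = int (card (?N \<inter> C)) * (int c - 1) + (int k - int (card (?N \<inter> C))) * int a"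
      unfolding e e2 by (simp only: of_nat_add of_nat_mult of_nat_diff[OF cpos] of_nat_diff[OF sle] of_nat_1)
    then show ?thesis by (simp add: algebra_simps)
  qed
  obtain x0 where x0: "x0 \<in> C" using Cne by auto
  have x0V: "x0 \<in> V" using x0 CV by auto
  have s0: "card (nbrs V E x0 \<inter> C) = c - 1" using NC_in[OF x0] finC x0 unfolding c_def by simp
  have rhs0: "(\<Sum>z\<in>C. card (nbrs V E x0 \<inter> nbrs V E z)) = k + (c - 1) * lam"
  proof -
    have "(\<Sum>z\<in>C. card (nbrs V E x0 \<inter> nbrs V E z)) = card (nbrs V E x0 \<inter> nbrs V E x0) + (\<Sum>z\<in>C - {x0}. card (nbrs V E x0 \<inter> nbrs V E z))"
      by (rule sum.remove[OF finC x0])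
    also have "(\<Sum>z\<in>C - {x0}. card (nbrs V E x0 \<inter> nbrs V E z)) = (\<Sum>z\<in>C - {x0}. lam)"
    proof (rule sum.cong)
      fix z assume z: "z \<in> C - {x0}"
      then have "E x0 z" using cl x0 by auto
      then show "card (nbrs V E x0 \<inter> nbrs V E z) = lam" using lamc x0 z CV by auto
    qed simp
    finally show ?thesis using reg[OF x0V] finC x0 unfolding c_def by simp
  qed
  have E1: "(int c - 1) * (int c - 1) + int a * (int k - (int c - 1)) = int k + (int c - 1) * int lam"
  proof -
    have R: "int (\<Sum>y\<in>nbrs V E x0. card (nbrs V E y \<inter> C)) = int k + (int c - 1) * int lam"
      unfolding trans[OF double_count[OF sg x0V CV] rhs0]
      by (simp only: of_nat_add of_nat_mult of_nat_diff[OF cpos] of_nat_1)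
    have s0': "int (card (nbrs V E x0 \<inter> C)) = int c - 1" using s0 cpos by simp
    have L: "int (\<Sum>y\<in>nbrs V E x0. card (nbrs V E y \<inter> C)) = (int c - 1) * (int c - 1) + int a * (int k - (int c - 1))"
      using lhs[OF x0V] unfolding s0' .
    show ?thesis using trans[OF L[symmetric] R] .
  qed
  have "V \<noteq> C"
  proof
    assume "V = C"
    then have "complete_graph V E" using cl unfolding complete_graph_def by auto
    then show False using nc by simp
  qed
  then obtain x1 where x1: "x1 \<in> V" "x1 \<notin> C" using CV by auto
  have s1: "card (nbrs V E x1 \<inter> C) = a" using nex x1 by auto
  have rhs1: "(\<Sum>z\<in>C. card (nbrs V E x1 \<inter> nbrs V E z)) = a * lam + (c - a) * mu"
  proof -
    let ?A = "C \<inter> nbrs V E x1"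
    have "(\<Sum>z\<in>C. card (nbrs V E x1 \<inter> nbrs V E z)) = (\<Sum>z\<in>C \<inter> ?A. card (nbrs V E x1 \<inter> nbrs V E z)) + (\<Sum>z\<in>C - ?A. card (nbrs V E x1 \<inter> nbrs V E z))"
      by (rule sum.Int_Diff[OF finC])
    also have "(\<Sum>z\<in>C \<inter> ?A. card (nbrs V E x1 \<inter> nbrs V E z)) = (\<Sum>z\<in>C \<inter> ?A. lam)"
      by (rule sum.cong) (use lamc x1 CV in \<open>auto simp: nbrs_def\<close>)
    also have "(\<Sum>z\<in>C - ?A. card (nbrs V E x1 \<inter> nbrs V E z)) = (\<Sum>z\<in>C - ?A. mu)"
      by (rule sum.cong) (use muc x1 CV in \<open>auto simp: nbrs_def\<close>)
    finally have "(\<Sum>z\<in>C. card (nbrs V E x1 \<inter> nbrs V E z)) = card (C \<inter> ?A) * lam + card (C - ?A) * mu" by simp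
    moreover have "C \<inter> ?A = nbrs V E x1 \<inter> C" by auto
    moreover have "card (C - ?A) = c - a"
      using card_Diff_subset_Int[of C ?A] finC s1 unfolding c_def by (simp add: Int_commute)
    ultimately show ?thesis using s1 by (simp add: mult.commute)
  qed
  have ac: "a \<le> c" using s1 card_mono[OF finC, of "nbrs V E x1 \<inter> C"] unfolding c_def by auto
  have E2: "(int c - 1) * int a + int a * (int k - int a) = int a * int lam + (int c - int a) * int mu"
  proof -
    have R: "int (\<Sum>y\<in>nbrs V E x1. card (nbrs V E y \<inter> C)) = int a * int lam + (int c - int a) * int mu"
      unfolding trans[OF double_count[OF sg x1(1) CV] rhs1]
      by (simp only: of_nat_add of_nat_mult of_nat_diff[OF ac])
    have L: "int (\<Sum>y\<in>nbrs V E x1. card (nbrs V E y \<inter> C)) = (int c - 1) * int a + int a * (int k - int a)"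
      using lhs[OF x1(1)] unfolding s1 .
    show ?thesis using trans[OF L[symmetric] R] .
  qed
  define th where "th = int c - 1 - int a"
  have "th^2 - ((int lam - int mu) * th + (int k - int mu))
      = ((int c - 1) * (int c - 1) + int a * (int k - (int c - 1)) - (int k + (int c - 1) * int lam))
      - ((int c - 1) * int a + int a * (int k - int a) - (int a * int lam + (int c - int a) * int mu))"
    unfolding th_def by (simp add: power2_eq_square algebra_simps)
  also have "\<dots> = 0" using E1 E2 by simp
  finally show ?thesis by (intro exI[of _ th]) simp
qed

lemma to_cayley:
  fixes V :: "'a set" and E :: "'a \<Rightarrow> 'a \<Rightarrow> bool"
  assumes sg: "simple_graph V E" and nc: "\<not> complete_graph V E"
    and reg: "\<And>x. x \<in> V \<Longrightarrow> card (nbrs V E x) = k"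
    and lamc: "\<And>x y. x \<in> V \<Longrightarrow> y \<in> V \<Longrightarrow> E x y \<Longrightarrow> card (nbrs V E x \<inter> nbrs V E y) = lam"
    and muc: "\<And>x y. x \<in> V \<Longrightarrow> y \<in> V \<Longrightarrow> x \<noteq> y \<Longrightarrow> \<not> E x y \<Longrightarrow> card (nbrs V E x \<inter> nbrs V E y) = mu"
    and cc: "circulant_conn n S" and iso: "graph_iso V E {0..<n} (circ_adj n S)"
    and th: "th^2 = (int lam - int mu) * th + (int k - int mu)"
    and mu: "0 < mu" "mu < k"
  shows False
proof -
  obtain f where f: "bij_betw f V {0..<n}" and fE: "\<And>x y. x \<in> V \<Longrightarrow> y \<in> V \<Longrightarrow> E x y \<longleftrightarrow> circ_adj n S (f x) (f y)"
    using iso unfolding graph_iso_def by auto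
  have inj: "inj_on f V" and img: "f ` V = {0..<n}" using f unfolding bij_betw_def by auto
  have cc': "0 < n" "S \<subseteq> {1..<n}" "\<And>s. s \<in> S \<Longrightarrow> (- s) mod n \<in> S" using cc unfolding circulant_conn_def by auto
  have NbI: "Nb n S (f x) = f ` nbrs V E x" if x: "x \<in> V" for x
  proof (intro equalityI subsetI)
    fix z assume "z \<in> Nb n S (f x)"
    then have z: "z \<in> {0..<n}" "(f x - z) mod n \<in> S" unfolding Nb_def by auto
    then obtain y where y: "y \<in> V" "z = f y" using img by (metis imageE)
    then have "E x y" using fE[OF x y(1)] z unfolding circ_adj_def by simp
    then show "z \<in> f ` nbrs V E x" using y unfolding nbrs_def by auto
  next
    fix z assume "z \<in> f ` nbrs V E x"
    then obtain y where y: "y \<in> V" "E x y" "z = f y" unfolding nbrs_def by auto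
    have "f y \<in> {0..<n}" using y img by auto
    then show "z \<in> Nb n S (f x)" using fE[OF x y(1)] y unfolding Nb_def circ_adj_def by auto
  qed
  have NV: "nbrs V E x \<subseteq> V" for x unfolding nbrs_def by auto
  have pre: "\<exists>x\<in>V. u = f x" if "0 \<le> u" "u < n" for u using img that by auto
  have cay: "cayley n S k lam mu"
  proof
    show "0 < n" "S \<subseteq> {1..<n}" using cc' by auto
    show "\<And>s. s \<in> S \<Longrightarrow> (- s) mod n \<in> S" using cc' by auto
  next
    fix u assume "0 \<le> u" "u < n"
    then obtain x where x: "x \<in> V" "u = f x" using pre by blast
    show "card (Nb n S u) = k" unfolding x(2) NbI[OF x(1)]
      using card_image[OF inj_on_subset[OF inj NV]] reg[OF x(1)] by simp
  next
    fix u v assume uv: "0 \<le> u" "u < n" "0 \<le> v" "v < n" "(u - v) mod n \<in> S"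
    obtain x where x: "x \<in> V" "u = f x" using pre uv by blast
    obtain y where y: "y \<in> V" "v = f y" using pre uv by blast
    have "E x y" using fE[OF x(1) y(1)] uv x y unfolding circ_adj_def by simp
    moreover have "Nb n S u \<inter> Nb n S v = f ` (nbrs V E x \<inter> nbrs V E y)"
      unfolding x(2) y(2) NbI[OF x(1)] NbI[OF y(1)] by (rule inj_on_image_Int[OF inj NV NV, symmetric])
    moreover have "card (f ` (nbrs V E x \<inter> nbrs V E y)) = card (nbrs V E x \<inter> nbrs V E y)"
      by (rule card_image) (rule inj_on_subset[OF inj]; use NV in auto)
    ultimately show "card (Nb n S u \<inter> Nb n S v) = lam" using lamc[OF x(1) y(1)] by simp
  next
    fix u v assume uv: "0 \<le> u" "u < n" "0 \<le> v" "v < n" "u \<noteq> v" "(u - v) mod n \<notin> S"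
    obtain x where x: "x \<in> V" "u = f x" using pre uv by blast
    obtain y where y: "y \<in> V" "v = f y" using pre uv by blast
    have "\<not> E x y" using fE[OF x(1) y(1)] uv x y unfolding circ_adj_def by simp
    moreover have "x \<noteq> y" using uv x y by auto
    moreover have "Nb n S u \<inter> Nb n S v = f ` (nbrs V E x \<inter> nbrs V E y)"
      unfolding x(2) y(2) NbI[OF x(1)] NbI[OF y(1)] by (rule inj_on_image_Int[OF inj NV NV, symmetric])
    moreover have "card (f ` (nbrs V E x \<inter> nbrs V E y)) = card (nbrs V E x \<inter> nbrs V E y)"
      by (rule card_image) (rule inj_on_subset[OF inj]; use NV in auto)
    ultimately show "card (Nb n S u \<inter> Nb n S v) = mu" using muc[OF x(1) y(1)] by simp
  qed
  obtain x y where xy: "x \<in> V" "y \<in> V" "x \<noteq> y" "\<not> E x y" using nc unfolding complete_graph_def by auto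
  define t where "t = (f x - f y) mod n"
  have fxy: "f x \<noteq> f y" using inj xy unfolding inj_on_def by auto
  have fr: "0 \<le> f x" "f x < n" "0 \<le> f y" "f y < n" using img xy by auto
  have tS: "t \<notin> S" using fE[OF xy(1,2)] xy(4) unfolding t_def circ_adj_def by simp
  have t0: "t \<noteq> 0"
  proof
    assume "t = 0"
    then have "n dvd f x - f y" unfolding t_def by auto
    then have "f x mod n = f y mod n" by (simp add: mod_eq_dvd_iff)
    then show False using fr fxy by simp
  qed
  have "0 \<le> t" "t < n" using cc'(1) unfolding t_def by simp_all
  then have tr: "0 < t" "t < n" using t0 by auto
  have "cayley_main n S k lam mu th t"
    unfolding cayley_main_def cayley_main_axioms_def
    using cay cayley.alpha_def[OF cay] cayley.beta_def[OF cay] th mu tr tS by simp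
  then show False by (rule cayley_main.cayley_false)
qed

theorem proposition3p11:
  fixes V :: "'a set" and E :: "'a \<Rightarrow> 'a \<Rightarrow> bool"
  assumes "nontrivial_srg V E"
    and "neumaier_graph V E"
    and "circulant_graph V E"
  shows False
proof -
  obtain n0 k lam mu where srg: "strongly_regular V E n0 k lam mu" and mu: "0 < mu" "mu < k"
    using assms(1) unfolding nontrivial_srg_def by blast
  have sg: "simple_graph V E" and nc: "\<not> complete_graph V E"
    and er: "edge_regular V E k lam"
    and muc: "\<And>x y. x \<in> V \<Longrightarrow> y \<in> V \<Longrightarrow> x \<noteq> y \<Longrightarrow> \<not> E x y \<Longrightarrow> card (nbrs V E x \<inter> nbrs V E y) = mu"
    using srg unfolding strongly_regular_def by auto
  have reg: "\<And>x. x \<in> V \<Longrightarrow> card (nbrs V E x) = k"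
    and lamc: "\<And>x y. x \<in> V \<Longrightarrow> y \<in> V \<Longrightarrow> E x y \<Longrightarrow> card (nbrs V E x \<inter> nbrs V E y) = lam"
    using er unfolding edge_regular_def regular_graph_def by auto
  obtain C a where rc: "regular_clique V E C a" using assms(2) unfolding neumaier_graph_def by blast
  obtain th where th: "th^2 = (int lam - int mu) * th + (int k - int mu)"
    using clique_theta[OF sg nc reg lamc muc rc] by blast
  obtain n S where cc: "circulant_conn n S" and iso: "graph_iso V E {0..<n} (circ_adj n S)"
    using assms(3) unfolding circulant_graph_def by blast
  show False using to_cayley[OF sg nc reg lamc muc cc iso th mu] .
qed

end
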